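(* Let $(G,S)$ be a Coxeter system, where $G$ is infinite and $S=\{s_0,s_1,\dots,s_k\}$. Suppose that for some $l\le k$ the group $G_l=\langle s_0,\dots,s_l\rangle$ (with generating set $\{s_0,\dots,s_l\}$) is infinite and indecomposable, and let $m$ be a positive integer with $m\le k$. Then the subgroup $H=\langle s_m,\dots,s_k\rangle$ has infinite index in $G$.
   Context: A Coxeter system $(G,S)$ consists of a finite set $S$ and a group $G$ with presentation $\langle S \mid (s_is_j)^{m_{ij}}=1\rangle$, $m_{ii}=1$, $m_{ij}\in\{2,3,\dots,\infty\}$ for $i\ne j$. For a subset $T\subseteq S$, the subgroup generated by $T$ is again a Coxeter group with generating set $T$. A Coxeter group with fixed generating set $T$ is decomposable if $T=T_1\cup T_2$ with $T_1,T_2$ nonempty and every element of $T_1$ commuting with every element of $T_2$; otherwise it is indecomposable. *)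

theory Defs
  imports "HOL-Algebra.Algebra" "HOL-Library.Extended_Nat"
begin

text \<open>Coxeter matrix on a finite index set S of generators (indices are naturals).
  The entry M i j = \<infinity> means that there is no relation between s_i and s_j.\<close>
definition coxeter_matrix :: "(nat \<Rightarrow> nat \<Rightarrow> enat) \<Rightarrow> nat set \<Rightarrow> bool" where
  "coxeter_matrix M S \<longleftrightarrow> finite S \<and> (\<forall>i\<in>S. M i i = 1) \<and>
     (\<forall>i\<in>S. \<forall>j\<in>S. i \<noteq> j \<longrightarrow> M i j = M j i \<and> M i j \<ge> 2)"

fun alt :: "nat \<Rightarrow> nat \<Rightarrow> nat \<Rightarrow> nat list" where
  "alt i j 0 = []"
| "alt i j (Suc n) = i # alt j i n"

definition cox_step :: "(nat \<Rightarrow> nat \<Rightarrow> enat) \<Rightarrow> nat set \<Rightarrow> (nat list \<times> nat list) set" where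
  "cox_step M S = {(x @ alt i j (2 * n) @ y, x @ y) | x y i j n.
      i \<in> S \<and> j \<in> S \<and> M i j = enat n}"

text \<open>Equality in the Coxeter group of words over S: the congruence generated by the relators
  in the free monoid on S (since all generators are involutions this is the group presentation).\<close>
definition cox_rel :: "(nat \<Rightarrow> nat \<Rightarrow> enat) \<Rightarrow> nat set \<Rightarrow> (nat list \<times> nat list) set" where
  "cox_rel M S = ((cox_step M S \<union> (cox_step M S)\<inverse>)\<^sup>*) \<inter> (lists S \<times> lists S)"

definition coxeter_group :: "(nat \<Rightarrow> nat \<Rightarrow> enat) \<Rightarrow> nat set \<Rightarrow> nat list set monoid" where
  "coxeter_group M S =
     \<lparr> carrier = lists S // cox_rel M S,
       monoid.mult = (\<lambda>A B. cox_rel M S `` {(SOME u. u \<in> A) @ (SOME v. v \<in> B)}),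
       monoid.one = cox_rel M S `` {[]} \<rparr>"

definition cox_gen :: "(nat \<Rightarrow> nat \<Rightarrow> enat) \<Rightarrow> nat set \<Rightarrow> nat \<Rightarrow> nat list set" where
  "cox_gen M S i = cox_rel M S `` {[i]}"

definition cox_decomposable :: "(nat \<Rightarrow> nat \<Rightarrow> enat) \<Rightarrow> nat set \<Rightarrow> nat set \<Rightarrow> bool" where
  "cox_decomposable M S T \<longleftrightarrow> (\<exists>T1 T2. T1 \<union> T2 = T \<and> T1 \<inter> T2 = {} \<and> T1 \<noteq> {} \<and> T2 \<noteq> {} \<and>
     (\<forall>a\<in>T1. \<forall>b\<in>T2. cox_gen M S a \<otimes>\<^bsub>coxeter_group M S\<^esub> cox_gen M S b
                     = cox_gen M S b \<otimes>\<^bsub>coxeter_group M S\<^esub> cox_gen M S a))"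

end

theory Submission
  imports Defs
begin

lemma alt_set: "set (alt i j n) \<subseteq> {i, j}"
  by (induction n arbitrary: i j) auto

lemma alt_len: "length (alt i j n) = n"
  by (induction n arbitrary: i j) auto

lemma alt_add_even: "alt i j (2*a + b) = alt i j (2*a) @ alt i j b"
  by (induction a arbitrary: i j) (auto simp: numeral_2_eq_2)

lemma rev_alt_even: "rev (alt i j (2*n)) = alt j i (2*n)"
proof (induction n arbitrary: i j)
  case 0 then show ?case by simp
next
  case (Suc n)
  have "alt i j (2 * Suc n) = alt i j (2*n) @ [i, j]"
    using alt_add_even[of i j n 2] by (simp add: numeral_2_eq_2)
  moreover have "alt j i (2 * Suc n) = [j, i] @ alt j i (2*n)"
    by (simp add: numeral_2_eq_2)
  ultimately show ?case using Suc by simp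
qed

locale cox =
  fixes M :: "nat \<Rightarrow> nat \<Rightarrow> enat" and k :: nat
  assumes cm: "coxeter_matrix M {..k}"
begin

lemma lists_rev[simp]: "rev a \<in> lists A \<longleftrightarrow> a \<in> lists A" by auto

abbreviation S where "S \<equiv> {..k}"
definition eqv :: "nat list \<Rightarrow> nat list \<Rightarrow> bool" (infix "\<doteq>" 50) where
  "a \<doteq> b \<equiv> (a, b) \<in> cox_rel M {..k}"
abbreviation "stp \<equiv> cox_step M {..k}"

lemma M_diag: "i \<in> S \<Longrightarrow> M i i = 1" using cm by (simp add: coxeter_matrix_def)
lemma M_sym: "i \<in> S \<Longrightarrow> j \<in> S \<Longrightarrow> M i j = M j i"
  using cm by (cases "i = j") (auto simp: coxeter_matrix_def)
lemma M_ge2: "i \<in> S \<Longrightarrow> j \<in> S \<Longrightarrow> i \<noteq> j \<Longrightarrow> M i j \<ge> 2"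
  using cm by (auto simp: coxeter_matrix_def)

lemma stp_lists: "(u, v) \<in> stp \<Longrightarrow> (u \<in> lists S \<longleftrightarrow> v \<in> lists S)"
  unfolding cox_step_def using alt_set by fastforce

lemma stp_ctx: "(u, v) \<in> stp \<Longrightarrow> (x @ u @ y, x @ v @ y) \<in> stp"
  unfolding cox_step_def by clarsimp (metis append.assoc)

lemma E_ctx: "(u, v) \<in> (stp \<union> stp\<inverse>)\<^sup>* \<Longrightarrow> (x @ u @ y, x @ v @ y) \<in> (stp \<union> stp\<inverse>)\<^sup>*"
proof (induction rule: rtrancl_induct)
  case base then show ?case by simp
next
  case (step b c)
  then have "(x @ b @ y, x @ c @ y) \<in> stp \<union> stp\<inverse>" using stp_ctx by blast
  then show ?case using step by (meson rtrancl.rtrancl_into_rtrancl)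
qed

lemma eqv_def': "a \<doteq> b \<longleftrightarrow> (a, b) \<in> (stp \<union> stp\<inverse>)\<^sup>* \<and> a \<in> lists S \<and> b \<in> lists S"
  by (simp add: eqv_def cox_rel_def)

lemma eqv_refl[intro]: "a \<in> lists S \<Longrightarrow> a \<doteq> a"
  by (simp add: eqv_def')

lemma eqv_sym: "a \<doteq> b \<Longrightarrow> b \<doteq> a"
proof -
  assume "a \<doteq> b"
  then have "(b, a) \<in> ((stp \<union> stp\<inverse>)\<inverse>)\<^sup>*" "a \<in> lists S" "b \<in> lists S"
    unfolding eqv_def' by (auto intro: rtrancl_converseI)
  moreover have "(stp \<union> stp\<inverse>)\<inverse> = stp \<union> stp\<inverse>" by auto
  ultimately show ?thesis unfolding eqv_def' by simp
qed

lemma eqv_trans[trans]: "a \<doteq> b \<Longrightarrow> b \<doteq> c \<Longrightarrow> a \<doteq> c"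
  unfolding eqv_def' by auto

lemma eqv_lists: "a \<doteq> b \<Longrightarrow> a \<in> lists S" "a \<doteq> b \<Longrightarrow> b \<in> lists S"
  by (auto simp: eqv_def')

lemma eqv_ctx: "u \<doteq> v \<Longrightarrow> x \<in> lists S \<Longrightarrow> y \<in> lists S \<Longrightarrow> x @ u @ y \<doteq> x @ v @ y"
  unfolding eqv_def' using E_ctx by auto

lemma eqv_app: "u \<doteq> v \<Longrightarrow> x \<doteq> y \<Longrightarrow> u @ x \<doteq> v @ y"
proof -
  assume a: "u \<doteq> v" "x \<doteq> y"
  have "u @ x \<doteq> v @ x" using eqv_ctx[OF a(1), of "[]" x] eqv_lists[OF a(2)] by simp
  also have "v @ x \<doteq> v @ y" using eqv_ctx[OF a(2), of v "[]"] eqv_lists[OF a(1)] by simp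
  finally show ?thesis .
qed

lemma eqv_relator: "i \<in> S \<Longrightarrow> j \<in> S \<Longrightarrow> M i j = enat n \<Longrightarrow> alt i j (2*n) \<doteq> []"
proof -
  assume a: "i \<in> S" "j \<in> S" "M i j = enat n"
  have "([] @ alt i j (2*n) @ [], [] @ []) \<in> stp" unfolding cox_step_def using a by blast
  moreover have "alt i j (2*n) \<in> lists S" using alt_set[of i j "2*n"] a by auto
  ultimately show ?thesis unfolding eqv_def' by auto
qed

lemma eqv_ii: "i \<in> S \<Longrightarrow> [i, i] \<doteq> []"
  using eqv_relator[of i i 1] M_diag by (simp add: one_enat_def numeral_2_eq_2)

lemma eqv_Cons_cancel: "i \<in> S \<Longrightarrow> i # i # w \<doteq> w \<longleftrightarrow> w \<in> lists S"
proof
  assume "i \<in> S" "w \<in> lists S"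
  then show "i # i # w \<doteq> w" using eqv_ctx[OF eqv_ii, of i "[]" w] by simp
qed (rule eqv_lists(2))

lemma rev_cancel: "w \<in> lists S \<Longrightarrow> rev w @ w \<doteq> []"
proof (induction w)
  case Nil then show ?case by auto
next
  case (Cons a w)
  have "rev w @ [a, a] @ w \<doteq> rev w @ [] @ w" using eqv_ctx[OF eqv_ii[of a], of "rev w" w] Cons by auto
  then show ?case using Cons by (auto intro: eqv_trans)
qed

lemma rev_cancel2: "w \<in> lists S \<Longrightarrow> w @ rev w \<doteq> []"
  using rev_cancel[of "rev w"] by simp

lemma cancel_left: "a \<in> lists S \<Longrightarrow> a @ x \<doteq> a @ y \<Longrightarrow> x \<doteq> y"
proof -
  assume a: "a \<in> lists S" "a @ x \<doteq> a @ y"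
  have x: "x \<in> lists S" "y \<in> lists S" using eqv_lists[OF a(2)] by auto
  have "x \<doteq> rev a @ a @ x" using eqv_ctx[OF rev_cancel[OF a(1)], of "[]" x] x eqv_sym by auto
  also have "rev a @ a @ x \<doteq> rev a @ a @ y" using eqv_ctx[OF a(2), of "rev a" "[]"] a by auto
  also have "rev a @ a @ y \<doteq> y" using eqv_ctx[OF rev_cancel[OF a(1)], of "[]" y] x by auto
  finally show ?thesis .
qed

lemma cancel_right: "a \<in> lists S \<Longrightarrow> x @ a \<doteq> y @ a \<Longrightarrow> x \<doteq> y"
proof -
  assume a: "a \<in> lists S" "x @ a \<doteq> y @ a"
  have x: "x \<in> lists S" "y \<in> lists S" using eqv_lists[OF a(2)] by auto
  have "x \<doteq> x @ a @ rev a" using eqv_ctx[OF rev_cancel2[OF a(1)], of x "[]"] x eqv_sym by auto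
  also have "x @ a @ rev a \<doteq> y @ a @ rev a" using eqv_ctx[OF a(2), of "[]" "rev a"] a by auto
  also have "y @ a @ rev a \<doteq> y" using eqv_ctx[OF rev_cancel2[OF a(1)], of y "[]"] x by auto
  finally show ?thesis .
qed

lemma eqv_length_parity: "a \<doteq> b \<Longrightarrow> even (length a) = even (length b)"
proof -
  assume "a \<doteq> b"
  then have "(a, b) \<in> (stp \<union> stp\<inverse>)\<^sup>*" by (simp add: eqv_def')
  then show ?thesis
  proof (induction rule: rtrancl_induct)
    case (step b c)
    then have "even (length b) = even (length c)"
      by (auto simp: cox_step_def alt_len)
    then show ?case using step by simp
  qed simp
qed

end

lemma cheb:
  fixes x :: "nat \<Rightarrow> real" and \<theta> :: real
  assumes rec: "\<And>r. x (Suc (Suc r)) = 2 * cos \<theta> * x (Suc r) - x r"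
  shows "x r * sin \<theta> = sin (real r * \<theta>) * x 1 - sin ((real r - 1) * \<theta>) * x 0"
proof -
  have "x r * sin \<theta> = sin (real r * \<theta>) * x 1 - sin ((real r - 1) * \<theta>) * x 0 \<and>
        x (Suc r) * sin \<theta> = sin (real (Suc r) * \<theta>) * x 1 - sin ((real (Suc r) - 1) * \<theta>) * x 0"
  proof (induction r)
    case 0 then show ?case by (simp add: algebra_simps)
  next
    case (Suc r)
    let ?a = "real (Suc r) * \<theta>"
    have gen: "sin (y + \<theta>) = 2 * cos \<theta> * sin y - sin (y - \<theta>)" for y
      by (simp add: sin_add sin_diff algebra_simps)
    have id1: "sin (real (Suc (Suc r)) * \<theta>) = 2 * cos \<theta> * sin ?a - sin (real r * \<theta>)"
    proof -
      have "real (Suc (Suc r)) * \<theta> = ?a + \<theta>" by (simp add: algebra_simps)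
      moreover have "real r * \<theta> = ?a - \<theta>" by (simp add: algebra_simps)
      ultimately show ?thesis using gen[of ?a] by simp
    qed
    have id2: "sin ((real (Suc (Suc r)) - 1) * \<theta>) = 2 * cos \<theta> * sin ((real (Suc r) - 1) * \<theta>) - sin ((real r - 1) * \<theta>)"
    proof -
      let ?b = "real r * \<theta>"
      have "(real (Suc (Suc r)) - 1) * \<theta> = ?b + \<theta>" by (simp add: algebra_simps)
      moreover have "(real r - 1) * \<theta> = ?b - \<theta>" by (simp add: algebra_simps)
      moreover have "(real (Suc r) - 1) * \<theta> = ?b" by simp
      ultimately show ?thesis using gen[of ?b] by simp
    qed
    have "x (Suc (Suc r)) * sin \<theta> = 2 * cos \<theta> * (x (Suc r) * sin \<theta>) - x r * sin \<theta>"
      by (simp add: rec algebra_simps)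
    also have "\<dots> = sin (real (Suc (Suc r)) * \<theta>) * x 1 - sin ((real (Suc (Suc r)) - 1) * \<theta>) * x 0"
      using Suc by (simp only: id1 id2) (simp add: algebra_simps)
    finally show ?case using Suc by simp
  qed
  then show ?thesis by simp
qed

lemma cheb_period:
  fixes x :: "nat \<Rightarrow> real" and n :: nat
  assumes n: "n \<ge> 3"
    and rec: "\<And>r. x (Suc (Suc r)) = 2 * cos (2 * pi / n) * x (Suc r) - x r"
  shows "x n = x 0"
proof -
  let ?t = "2 * pi / n"
  have pos: "0 < ?t" using n by simp
  have lt: "?t < pi" using n by (simp add: field_simps)
  have s: "sin ?t > 0" using pos lt by (simp add: sin_gt_zero)
  have "x n * sin ?t = sin (real n * ?t) * x 1 - sin ((real n - 1) * ?t) * x 0"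
    using cheb[of x ?t n] rec by simp
  moreover have "real n * ?t = 2 * pi" using n by simp
  moreover have "(real n - 1) * ?t = 2 * pi - ?t" using n by (simp add: field_simps)
  moreover have "sin (2 * pi - ?t) = - sin ?t" by (simp add: sin_diff)
  ultimately have "x n * sin ?t = x 0 * sin ?t" by simp
  then show ?thesis using s by simp
qed

context cox begin

definition Bm :: "nat \<Rightarrow> nat \<Rightarrow> real" where
  "Bm i j = (if i = j then 1 else (case M i j of enat n \<Rightarrow> - cos (pi / real n) | \<infinity> \<Rightarrow> -1))"

definition Bf :: "nat \<Rightarrow> (nat \<Rightarrow> real) \<Rightarrow> real" where
  "Bf i v = (\<Sum>l\<le>k. Bm i l * v l)"

definition ee :: "nat \<Rightarrow> nat \<Rightarrow> real" where "ee j = (\<lambda>l. if l = j then 1 else 0)"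

definition sig :: "nat \<Rightarrow> (nat \<Rightarrow> real) \<Rightarrow> (nat \<Rightarrow> real)" where
  "sig i v = (\<lambda>l. v l - 2 * Bf i v * ee i l)"

abbreviation rho :: "nat list \<Rightarrow> (nat \<Rightarrow> real) \<Rightarrow> (nat \<Rightarrow> real)" where
  "rho w \<equiv> foldr sig w"

lemma Bf_ee: "j \<le> k \<Longrightarrow> Bf i (ee j) = Bm i j"
proof -
  assume j: "j \<le> k"
  have "Bf i (ee j) = (\<Sum>l\<in>{..k}. if l = j then Bm i l else 0)"
    unfolding Bf_def ee_def by (intro sum.cong) auto
  also have "\<dots> = Bm i j" using j by (simp add: sum.delta)
  finally show ?thesis .
qed

lemma Bf_lin: "Bf i (\<lambda>l. v l - a * ee j l - b * ee j' l) = Bf i v - a * Bf i (ee j) - b * Bf i (ee j')"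
  unfolding Bf_def by (simp add: sum_subtractf sum_distrib_left sum.distrib algebra_simps)

lemma Bf_lin1: "Bf i (\<lambda>l. v l - a * ee j l) = Bf i v - a * Bf i (ee j)"
  using Bf_lin[of i v a j 0 j] by simp

lemma sig_coord: "l \<noteq> i \<Longrightarrow> sig i v l = v l"
  by (simp add: sig_def ee_def)

lemma rho_coord: "l \<notin> set w \<Longrightarrow> rho w v l = v l"
  by (induction w) (auto simp: sig_coord)

lemma sig_sig: "i \<le> k \<Longrightarrow> sig i (sig i v) = v"
proof -
  assume i: "i \<le> k"
  have "Bf i (sig i v) = - Bf i v"
    unfolding sig_def using Bf_lin1[of i v "2 * Bf i v" i] Bf_ee[OF i] by (simp add: Bm_def)
  then show ?thesis unfolding sig_def[of i "sig i v"] by (simp add: sig_def algebra_simps)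
qed

lemma Bm_sym: "i \<in> S \<Longrightarrow> j \<in> S \<Longrightarrow> Bm i j = Bm j i"
  using M_sym by (simp add: Bm_def)

lemma rho_alt: "rho (alt i j (2*n)) v = ((\<lambda>v. sig i (sig j v)) ^^ n) v"
proof (induction n arbitrary: v)
  case (Suc n)
  have "alt i j (2 * Suc n) = [i, j] @ alt i j (2*n)" by (simp add: numeral_2_eq_2)
  then show ?case using Suc by simp
qed simp

lemma braid:
  assumes ij: "i \<in> S" "j \<in> S" "i \<noteq> j" and Mij: "M i j = enat n"
  shows "((\<lambda>v. sig i (sig j v)) ^^ n) v = v"
proof -
  define c where "c = cos (pi / real n)"
  have n2: "n \<ge> 2" using M_ge2[OF ij] Mij by (simp add: numeral_eq_enat)
  have Bij: "Bm i j = - c" "Bm j i = - c" using Mij Bm_sym[OF ij(1,2)] ij(3)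
    by (auto simp: Bm_def c_def)
  have Bii: "Bm i i = 1" "Bm j j = 1" by (auto simp: Bm_def)
  have ik: "i \<le> k" "j \<le> k" using ij by auto
  define T where "T = (\<lambda>v. sig i (sig j v))"
  have Tform: "T v = (\<lambda>l. v l - (2 * Bf i v + 4 * c * Bf j v) * ee i l - 2 * Bf j v * ee j l)" for v
  proof -
    have "Bf i (sig j v) = Bf i v + 2 * c * Bf j v"
      unfolding sig_def using Bf_lin1[of i v "2 * Bf j v" j] Bf_ee[OF ik(2), of i] Bij by simp
    then show ?thesis unfolding T_def sig_def[of i] by (auto simp: sig_def algebra_simps)
  qed
  have TP: "Bf i (T v) = - Bf i v - 2 * c * Bf j v" for v
    unfolding Tform Bf_lin Bf_ee[OF ik(1)] Bf_ee[OF ik(2)] Bij Bii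
    by (simp add: algebra_simps)
  have TQ: "Bf j (T v) = 2 * c * Bf i v + (4 * c^2 - 1) * Bf j v" for v
    unfolding Tform Bf_lin Bf_ee[OF ik(1)] Bf_ee[OF ik(2)] Bij Bii
    by (simp add: algebra_simps power2_eq_square)
  define P where "P r = Bf i ((T ^^ r) v)" for r
  define Q where "Q r = Bf j ((T ^^ r) v)" for r
  have PS: "P (Suc r) = - P r - 2 * c * Q r" for r unfolding P_def Q_def by (simp add: TP)
  have QS: "Q (Suc r) = 2 * c * P r + (4 * c^2 - 1) * Q r" for r unfolding P_def Q_def by (simp add: TQ)
  have iter: "(T ^^ r) v = (\<lambda>l. v l - (\<Sum>q<r. 2 * P q + 4 * c * Q q) * ee i l - (\<Sum>q<r. 2 * Q q) * ee j l)" for r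
  proof (induction r)
    case 0 then show ?case by simp
  next
    case (Suc r)
    have "(T ^^ Suc r) v = T ((T ^^ r) v)" by simp
    also have "\<dots> = (\<lambda>l. (T ^^ r) v l - (2 * P r + 4 * c * Q r) * ee i l - 2 * Q r * ee j l)"
      unfolding Tform P_def Q_def by simp
    finally show ?case using Suc by (simp add: algebra_simps)
  qed
  have P2: "P (Suc (Suc r)) = (4 * c^2 - 2) * P (Suc r) - P r" for r
  proof -
    have h: "2 * c * Q r = - P (Suc r) - P r" using PS[of r] by simp
    have "P (Suc (Suc r)) = - P (Suc r) - 4 * c^2 * P r - (4 * c^2-1) * (2 * c * Q r)"
      using PS[of "Suc r"] QS[of r] by (simp add: algebra_simps power2_eq_square)
    also have "\<dots> = (4 * c^2 - 2) * P (Suc r) - P r" unfolding h by (simp add: algebra_simps)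
    finally show ?thesis .
  qed
  have Q2: "Q (Suc (Suc r)) = (4 * c^2 - 2) * Q (Suc r) - Q r" for r
  proof -
    have h: "2 * c * P r = Q (Suc r) - (4 * c^2 - 1) * Q r" using QS[of r] by simp
    have h2: "2 * c * P (Suc r) = - (2 * c * P r) - 4 * c^2 * Q r"
      unfolding PS[of r] by (simp add: algebra_simps power2_eq_square)
    have "Q (Suc (Suc r)) = - (2 * c * P r) - 4 * c^2 * Q r + (4 * c^2 - 1) * Q (Suc r)"
      unfolding QS[of "Suc r"] h2 by simp
    also have "\<dots> = (4 * c^2 - 2) * Q (Suc r) - Q r" unfolding h by (simp add: algebra_simps)
    finally show ?thesis .
  qed
  have per: "P n = P 0 \<and> Q n = Q 0"
  proof (cases "n = 2")
    case True
    then have "c = 0" by (simp add: c_def)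
    then show ?thesis using True PS QS by (simp add: numeral_2_eq_2)
  next
    case False
    then have n3: "n \<ge> 3" using n2 by simp
    have cc: "4 * c^2 - 2 = 2 * cos (2 * pi / n)"
      using cos_double_cos[of "pi / real n"] by (simp add: c_def)
    show ?thesis using cheb_period[OF n3, of P] cheb_period[OF n3, of Q] P2 Q2 cc by simp
  qed
  define SP where "SP = (\<Sum>q<n. P q)"
  define SQ where "SQ = (\<Sum>q<n. Q q)"
  have "(\<Sum>q<n. P (Suc q)) = SP" unfolding SP_def
    using per sum.lessThan_Suc_shift[of P n] sum.lessThan_Suc[of P n] by simp
  then have e1: "SP = - SP - 2 * c * SQ" unfolding SP_def SQ_def PS
    by (simp add: sum_subtractf sum_negf sum_distrib_left)
  have "(\<Sum>q<n. Q (Suc q)) = SQ" unfolding SQ_def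
    using per sum.lessThan_Suc_shift[of Q n] sum.lessThan_Suc[of Q n] by simp
  then have e2: "SQ = 2 * c * SP + (4 * c^2 - 1) * SQ" unfolding SP_def SQ_def QS
    by (simp add: sum.distrib sum_distrib_left)
  have c1: "c^2 < 1"
  proof -
    have a: "0 < pi / real n" "pi / real n \<le> pi / 2" using n2 by (auto simp: field_simps)
    have "pi / real n \<le> pi" using a(2) pi_gt_zero by linarith
    then have "c < cos 0" unfolding c_def using a(1) by (intro cos_monotone_0_pi) auto
    moreover have "0 \<le> c" unfolding c_def by (rule cos_ge_zero) (use a in auto)
    ultimately show ?thesis by (simp add: power2_eq_square) (smt (verit) mult_left_le_one_le)
  qed
  have SP: "SP = - c * SQ" using e1 by simp
  then have "SQ * (2 - 2 * c^2) = 0" using e2 by (simp add: algebra_simps power2_eq_square)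
  then have SQ0: "SQ = 0" using c1 by simp
  then have SP0: "SP = 0" using SP by simp
  have "(\<Sum>q<n. 2 * P q + 4 * c * Q q) = 2 * SP + 4 * c * SQ" unfolding SP_def SQ_def
    by (simp add: sum.distrib sum_distrib_left)
  moreover have "(\<Sum>q<n. 2 * Q q) = 2 * SQ" unfolding SQ_def by (simp add: sum_distrib_left)
  ultimately show ?thesis using iter[of n] SQ0 SP0 unfolding T_def[symmetric] by simp
qed

lemma rho_relator: "i \<in> S \<Longrightarrow> j \<in> S \<Longrightarrow> M i j = enat n \<Longrightarrow> rho (alt i j (2*n)) v = v"
proof -
  assume a: "i \<in> S" "j \<in> S" "M i j = enat n"
  show ?thesis
  proof (cases "i = j")
    case True
    then have "n = 1" using M_diag[OF a(1)] a(3) by (simp add: one_enat_def)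
    then show ?thesis using True sig_sig[of i] a by (simp add: numeral_2_eq_2)
  next
    case False
    then show ?thesis using braid[OF a(1,2) False a(3)] rho_alt by simp
  qed
qed

lemma rho_stp: "(u, w) \<in> stp \<Longrightarrow> rho u = rho w"
  unfolding cox_step_def by (clarsimp simp: fun_eq_iff rho_relator)

lemma rho_eqv: "u \<doteq> w \<Longrightarrow> rho u = rho w"
proof -
  assume "u \<doteq> w"
  then have "(u, w) \<in> (stp \<union> stp\<inverse>)\<^sup>*" by (simp add: eqv_def')
  then show ?thesis
    by (induction rule: rtrancl_induct) (auto dest: rho_stp)
qed

lemma gen_not_in_sub: "j \<in> S \<Longrightarrow> [j] \<doteq> u \<Longrightarrow> u \<in> lists A \<Longrightarrow> j \<in> A"
proof (rule ccontr)
  assume a: "j \<in> S" "[j] \<doteq> u" "u \<in> lists A" "j \<notin> A"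
  have "j \<notin> set u" using a(3,4) by auto
  then have "rho u (ee j) j = 1" using rho_coord by (simp add: ee_def)
  moreover have "rho [j] (ee j) j = -1"
    using a(1) Bf_ee[of j j] by (simp add: sig_def Bm_def ee_def)
  ultimately show False using rho_eqv[OF a(2)] by simp
qed

end

lemma take_alt: "q \<le> N \<Longrightarrow> take q (alt i j N) = alt i j q"
proof (induction q arbitrary: i j N)
  case (Suc q)
  then obtain N' where "N = Suc N'" by (cases N) auto
  then show ?case using Suc by simp
qed simp

lemma alt_snoc: "alt i j (Suc N) = alt i j N @ [if even N then i else j]"
  by (induction N arbitrary: i j) auto

lemma alt_pal: "alt i j (Suc q) @ rev (alt i j q) = alt i j (Suc (2*q))"
proof (induction q arbitrary: i j)
  case 0 then show ?case by simp
next
  case (Suc q)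
  have "alt i j (Suc (Suc q)) @ rev (alt i j (Suc q)) = i # (alt j i (Suc q) @ rev (alt j i q)) @ [i]"
    by simp
  also have "\<dots> = i # alt j i (Suc (2*q)) @ [i]" using Suc by simp
  also have "\<dots> = i # alt j i (Suc (Suc (2*q)))" using alt_snoc[of j i "Suc (2*q)"] by simp
  finally show ?case by simp
qed

context cox begin

definition rf :: "nat list \<Rightarrow> nat \<Rightarrow> nat list" where
  "rf w p = take p w @ [w ! p] @ rev (take p w)"

definition ct :: "nat list \<Rightarrow> nat list \<Rightarrow> nat" where
  "ct w t = card {p. p < length w \<and> rf w p \<doteq> t}"

definition par :: "nat list \<Rightarrow> nat list \<Rightarrow> bool" where
  "par w t \<longleftrightarrow> odd (ct w t)"

lemma rf_lists: "w \<in> lists S \<Longrightarrow> p < length w \<Longrightarrow> rf w p \<in> lists S"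
  unfolding rf_def by (auto dest: in_set_takeD)

lemma rf_lists': "w \<in> lists A \<Longrightarrow> p < length w \<Longrightarrow> rf w p \<in> lists A"
  unfolding rf_def by (auto dest: in_set_takeD)

lemma rf_app1: "p < length x \<Longrightarrow> rf (x @ y) p = rf x p"
  by (simp add: rf_def nth_append)

lemma rf_app2: "rf (x @ y) (length x + q) = x @ rf y q @ rev x"
  by (simp add: rf_def nth_append)

lemma rf_Cons_Suc: "rf (s # w) (Suc q) = s # rf w q @ [s]"
  by (simp add: rf_def)

lemma rf_Cons_0: "rf (s # w) 0 = [s]"
  by (simp add: rf_def)

lemma conj_iff: "x \<in> lists S \<Longrightarrow> a \<in> lists S \<Longrightarrow> (x @ a @ rev x \<doteq> t) = (a \<doteq> rev x @ t @ x)"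
proof
  assume x: "x \<in> lists S" and a: "a \<in> lists S"
  { assume h: "x @ a @ rev x \<doteq> t"
    have t: "t \<in> lists S" using eqv_lists[OF h] by auto
    have "a \<doteq> (rev x @ x) @ a @ (rev x @ x)"
      using eqv_app[OF eqv_app[OF rev_cancel[OF x(1)] eqv_refl[OF a]] rev_cancel[OF x(1)]] eqv_sym by simp
    also have "(rev x @ x) @ a @ (rev x @ x) = rev x @ (x @ a @ rev x) @ x" by simp
    also have "rev x @ (x @ a @ rev x) @ x \<doteq> rev x @ t @ x" using eqv_ctx[OF h, of "rev x" x] x by simp
    finally show "a \<doteq> rev x @ t @ x" . }
  { assume h: "a \<doteq> rev x @ t @ x"
    have t: "t \<in> lists S" using eqv_lists[OF h] by auto
    have "x @ a @ rev x \<doteq> x @ (rev x @ t @ x) @ rev x" using eqv_ctx[OF h, of x "rev x"] x by simp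
    also have "x @ (rev x @ t @ x) @ rev x = (x @ rev x) @ t @ (x @ rev x)" by simp
    also have "(x @ rev x) @ t @ (x @ rev x) \<doteq> [] @ t @ []"
      using eqv_app[OF eqv_app[OF rev_cancel2[OF x(1)] eqv_refl[OF t]] rev_cancel2[OF x(1)]] by simp
    finally show "x @ a @ rev x \<doteq> t" by simp }
qed

lemma ct_app:
  assumes x: "x \<in> lists S" and y: "y \<in> lists S"
  shows "ct (x @ y) t = ct x t + ct y (rev x @ t @ x)"
proof -
  let ?A = "{p. p < length x \<and> rf x p \<doteq> t}"
  let ?B = "{q. q < length y \<and> rf y q \<doteq> rev x @ t @ x}"
  have "{p. p < length (x @ y) \<and> rf (x @ y) p \<doteq> t} = ?A \<union> (\<lambda>q. length x + q) ` ?B"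
  proof (intro equalityI subsetI)
    fix p assume "p \<in> {p. p < length (x @ y) \<and> rf (x @ y) p \<doteq> t}"
    then have p: "p < length (x @ y)" "rf (x @ y) p \<doteq> t" by auto
    show "p \<in> ?A \<union> (\<lambda>q. length x + q) ` ?B"
    proof (cases "p < length x")
      case True then show ?thesis using p rf_app1 by auto
    next
      case False
      then obtain q where q: "p = length x + q" by (metis le_add_diff_inverse not_less)
      have "rf y q \<in> lists S" using rf_lists[OF y] p q by simp
      then have "rf y q \<doteq> rev x @ t @ x" using p q rf_app2 conj_iff[OF x \<open>rf y q \<in> lists S\<close>] by auto
      then show ?thesis using q p by auto
    qed
  next
    fix p assume "p \<in> ?A \<union> (\<lambda>q. length x + q) ` ?B"
    then show "p \<in> {p. p < length (x @ y) \<and> rf (x @ y) p \<doteq> t}"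
    proof
      assume "p \<in> ?A" then show ?thesis using rf_app1 by auto
    next
      assume "p \<in> (\<lambda>q. length x + q) ` ?B"
      then obtain q where q: "p = length x + q" "q < length y" "rf y q \<doteq> rev x @ t @ x" by auto
      then show ?thesis using rf_app2 conj_iff[OF x eqv_lists(1)[OF q(3)]] by auto
    qed
  qed
  moreover have "?A \<inter> (\<lambda>q. length x + q) ` ?B = {}" by auto
  moreover have "card ((\<lambda>q. length x + q) ` ?B) = card ?B" by (simp add: card_image)
  ultimately show ?thesis unfolding ct_def by (simp add: card_Un_disjoint)
qed

lemma ct_cong: "t \<doteq> t' \<Longrightarrow> ct w t = ct w t'"
  unfolding ct_def by (rule arg_cong[where f=card]) (blast intro: eqv_trans eqv_sym)

lemma alt_refl: "q < N \<Longrightarrow> rf (alt i j N) q = alt i j (Suc (2*q))"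
proof -
  assume q: "q < N"
  have a0: "take q (alt i j N) @ [alt i j N ! q] = take (Suc q) (alt i j N)"
    by (rule take_Suc_conv_app_nth[symmetric]) (simp add: alt_len q)
  have a: "take q (alt i j N) @ [alt i j N ! q] = alt i j (Suc q)"
    unfolding a0 using q by (simp add: take_alt)
  have b: "take q (alt i j N) = alt i j q" using q by (simp add: take_alt)
  have "rf (alt i j N) q = (take q (alt i j N) @ [alt i j N ! q]) @ rev (take q (alt i j N))"
    by (simp add: rf_def)
  also have "\<dots> = alt i j (Suc q) @ rev (alt i j q)"
    by (simp only: a) (simp only: b)
  also have "\<dots> = alt i j (Suc (2*q))" by (rule alt_pal)
  finally show ?thesis .
qed

lemma ct_relator_even:
  assumes ij: "i \<in> S" "j \<in> S" "M i j = enat n"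
  shows "even (ct (alt i j (2*n)) t)"
proof -
  let ?f = "\<lambda>p. rf (alt i j (2*n)) p \<doteq> t"
  let ?B = "{q. q < n \<and> ?f q}"
  have per: "?f (q + n) = ?f q" if "q < n" for q
  proof -
    have e1: "rf (alt i j (2*n)) (q + n) = alt i j (Suc (2*(q+n)))"
      using that by (intro alt_refl) simp
    have e2: "Suc (2*(q+n)) = 2*n + Suc (2*q)" by simp
    have e3: "rf (alt i j (2*n)) q = alt i j (Suc (2*q))"
      using that by (intro alt_refl) simp
    have e: "rf (alt i j (2*n)) (q + n) = alt i j (2*n) @ rf (alt i j (2*n)) q"
      unfolding e1 e2 e3 by (rule alt_add_even)
    have l: "rf (alt i j (2*n)) q \<in> lists S"
      using rf_lists[of "alt i j (2*n)" q] alt_set[of i j "2*n"] ij that alt_len by auto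
    have "alt i j (2*n) @ rf (alt i j (2*n)) q \<doteq> [] @ rf (alt i j (2*n)) q"
      using eqv_app[OF eqv_relator[OF ij] eqv_refl[OF l]] .
    then have h: "alt i j (2*n) @ rf (alt i j (2*n)) q \<doteq> rf (alt i j (2*n)) q" by simp
    show ?thesis unfolding e
    proof
      assume "alt i j (2*n) @ rf (alt i j (2*n)) q \<doteq> t"
      then show "rf (alt i j (2*n)) q \<doteq> t" using eqv_trans[OF eqv_sym[OF h]] by blast
    next
      assume "rf (alt i j (2*n)) q \<doteq> t"
      then show "alt i j (2*n) @ rf (alt i j (2*n)) q \<doteq> t" using eqv_trans[OF h] by blast
    qed
  qed
  have "{p. p < length (alt i j (2*n)) \<and> ?f p} = ?B \<union> (\<lambda>q. q + n) ` ?B"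
  proof (intro equalityI subsetI)
    fix p assume "p \<in> {p. p < length (alt i j (2*n)) \<and> ?f p}"
    then have p: "p < 2 * n" "?f p" by (auto simp: alt_len)
    show "p \<in> ?B \<union> (\<lambda>q. q + n) ` ?B"
    proof (cases "p < n")
      case True then show ?thesis using p by auto
    next
      case False
      define q where "q = p - n"
      have "p = q + n" "q < n" using p(1) False by (auto simp: q_def)
      then show ?thesis using per p by auto
    qed
  next
    fix p assume "p \<in> ?B \<union> (\<lambda>q. q + n) ` ?B"
    then show "p \<in> {p. p < length (alt i j (2*n)) \<and> ?f p}" using per by (auto simp: alt_len)
  qed
  moreover have "?B \<inter> (\<lambda>q. q + n) ` ?B = {}" by auto
  moreover have "card ((\<lambda>q. q + n) ` ?B) = card ?B" by (simp add: card_image)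
  ultimately have "ct (alt i j (2*n)) t = 2 * card ?B" unfolding ct_def by (simp add: card_Un_disjoint)
  then show ?thesis by simp
qed

lemma par_stp:
  assumes st: "(u, v) \<in> stp" and u: "u \<in> lists S" and t: "t \<in> lists S"
  shows "par u t = par v t"
proof -
  obtain x y i j n where e: "u = x @ alt i j (2*n) @ y" "v = x @ y" and ij: "i \<in> S" "j \<in> S" "M i j = enat n"
    using st unfolding cox_step_def by blast
  let ?r = "alt i j (2*n)"
  have r: "?r \<in> lists S" using alt_set[of i j "2*n"] ij by auto
  have xy: "x \<in> lists S" "y \<in> lists S" using u e by auto
  let ?t = "rev x @ t @ x"
  have tt: "?t \<in> lists S" using xy t by simp
  have "ct u t = ct x t + ct ?r ?t + ct y (rev ?r @ ?t @ ?r)"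
    using e ct_app[OF xy(1), of "?r @ y"] ct_app[OF r xy(2)] r xy by simp
  moreover have "rev ?r @ ?t @ ?r \<doteq> ?t"
  proof -
    have "rev ?r \<doteq> []" using eqv_relator[of j i n] ij M_sym rev_alt_even by simp
    then have "rev ?r @ ?t @ ?r \<doteq> [] @ ?t @ []"
      using eqv_app[OF \<open>rev ?r \<doteq> []\<close> eqv_app[OF eqv_refl[OF tt] eqv_relator[OF ij]]] by simp
    then show ?thesis by simp
  qed
  moreover have "ct v t = ct x t + ct y ?t" using e ct_app[OF xy] by simp
  ultimately show ?thesis unfolding par_def using ct_cong ct_relator_even[OF ij, of ?t] by auto
qed

lemma par_eqv: "w \<doteq> w' \<Longrightarrow> t \<in> lists S \<Longrightarrow> par w t = par w' t"
proof -
  assume a: "w \<doteq> w'" "t \<in> lists S"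
  have w: "w \<in> lists S" using a by (simp add: eqv_def')
  have "(w, w') \<in> (stp \<union> stp\<inverse>)\<^sup>*" using a by (simp add: eqv_def')
  then have "w' \<in> lists S \<and> par w t = par w' t"
  proof (induction rule: rtrancl_induct)
    case base show ?case using w by simp
  next
    case (step b c)
    from step(3) have b: "b \<in> lists S" "par w t = par b t" by simp_all
    have "(b, c) \<in> stp \<or> (c, b) \<in> stp" using step(2) by simp
    then have "c \<in> lists S \<and> par b t = par c t"
    proof
      assume h: "(b, c) \<in> stp"
      have "c \<in> lists S" using stp_lists[OF h] b(1) by simp
      then show ?thesis using par_stp[OF h b(1) a(2)] by simp
    next
      assume h: "(c, b) \<in> stp"
      have "c \<in> lists S" using stp_lists[OF h] b(1) by simp
      then show ?thesis using par_stp[OF h _ a(2)] by simp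
    qed
    then show ?case using b by simp
  qed
  then show ?thesis by simp
qed

end

context cox begin

definition reduced :: "nat list \<Rightarrow> bool" where
  "reduced w \<longleftrightarrow> w \<in> lists S \<and> (\<forall>u. u \<doteq> w \<longrightarrow> length w \<le> length u)"

definition del :: "nat \<Rightarrow> nat list \<Rightarrow> nat list" where
  "del p w = take p w @ drop (Suc p) w"

lemma del_lists: "w \<in> lists A \<Longrightarrow> del p w \<in> lists A"
  unfolding del_def by (auto dest: in_set_takeD in_set_dropD)

lemma del_len: "p < length w \<Longrightarrow> length (del p w) = length w - 1"
  unfolding del_def by simp

lemma ct_Cons:
  assumes s: "s \<in> S" and w: "w \<in> lists S"
  shows "ct (s # w) t = (if [s] \<doteq> t then 1 else 0) + ct w (s # t @ [s])"
proof -
  have "ct ([s] @ w) t = ct [s] t + ct w (rev [s] @ t @ [s])" using ct_app[of "[s]" w t] s w by simp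
  moreover have "ct [s] t = (if [s] \<doteq> t then 1 else 0)"
  proof -
    have "{p. p < length [s] \<and> rf [s] p \<doteq> t} = (if [s] \<doteq> t then {0} else {})"
      by (auto simp: rf_def)
    then show ?thesis unfolding ct_def by simp
  qed
  ultimately show ?thesis by simp
qed

lemma sss: "s \<in> S \<Longrightarrow> [s, s, s] \<doteq> [s]"
  using eqv_ctx[OF eqv_ii[of s], of "[]" "[s]"] by simp

lemma par_Cons_s: "s \<in> S \<Longrightarrow> w \<in> lists S \<Longrightarrow> par (s # w) [s] \<longleftrightarrow> \<not> par w [s]"
  unfolding par_def using ct_Cons[of s w "[s]"] ct_cong[OF sss[of s], of w] eqv_refl[of "[s]"] by simp

lemma par_ex: "par w t \<Longrightarrow> \<exists>p < length w. rf w p \<doteq> t"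
proof -
  assume "par w t"
  then have "ct w t \<noteq> 0" unfolding par_def by (cases "ct w t") auto
  then have "{p. p < length w \<and> rf w p \<doteq> t} \<noteq> {}" unfolding ct_def by (metis card.empty)
  then show ?thesis by auto
qed

lemma rf_del: "w \<in> lists S \<Longrightarrow> p < length w \<Longrightarrow> rf w p @ w \<doteq> del p w"
proof -
  assume w: "w \<in> lists S" and p: "p < length w"
  define a where "a = take p w"
  define x where "x = w ! p"
  define c where "c = drop (Suc p) w"
  have wd: "w = a @ [x] @ c" using id_take_nth_drop[OF p] by (simp add: a_def x_def c_def)
  have l: "a \<in> lists S" "x \<in> S" "c \<in> lists S" using w p unfolding a_def x_def c_def
    by (auto dest: in_set_takeD in_set_dropD)
  have rfe: "rf w p = a @ [x] @ rev a" by (simp add: rf_def a_def x_def)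
  have "rf w p @ w = a @ [x] @ (rev a @ a) @ [x] @ c" using rfe wd by simp
  also have "\<dots> \<doteq> a @ [x] @ [] @ [x] @ c"
    using eqv_ctx[OF rev_cancel[OF l(1)], of "a @ [x]" "[x] @ c"] l by simp
  also have "a @ [x] @ [] @ [x] @ c = a @ [x, x] @ c" by simp
  also have "\<dots> \<doteq> a @ [] @ c" using eqv_ctx[OF eqv_ii[OF l(2)], of a c] l by simp
  finally show ?thesis by (simp add: del_def a_def c_def)
qed

lemma exchange: "par w t \<Longrightarrow> w \<in> lists S \<Longrightarrow> \<exists>p < length w. t @ w \<doteq> del p w"
proof -
  assume a: "par w t" "w \<in> lists S"
  obtain p where p: "p < length w" "rf w p \<doteq> t" using par_ex[OF a(1)] by auto
  have "t @ w \<doteq> rf w p @ w" using eqv_app[OF eqv_sym[OF p(2)] eqv_refl[OF a(2)]] .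
  also have "\<dots> \<doteq> del p w" by (rule rf_del[OF a(2) p(1)])
  finally show ?thesis using p by auto
qed

lemma reduced_exists_over:
  assumes w: "w \<in> lists A" "A \<subseteq> S"
  shows "\<exists>u \<in> lists A. u \<doteq> w \<and> (\<forall>v \<in> lists A. v \<doteq> w \<longrightarrow> length u \<le> length v)"
proof -
  have ww: "w \<in> lists S" using w by auto
  obtain u where u: "u \<in> lists A \<and> u \<doteq> w" "\<And>v. v \<in> lists A \<and> v \<doteq> w \<Longrightarrow> length u \<le> length v"
    using ex_has_least_nat[of "\<lambda>u. u \<in> lists A \<and> u \<doteq> w" w length] w ww by blast
  then show ?thesis by blast
qed

lemma reduced_exists: "w \<in> lists S \<Longrightarrow> \<exists>u. u \<doteq> w \<and> reduced u"
proof -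
  assume w: "w \<in> lists S"
  obtain u where u: "u \<in> lists S" "u \<doteq> w" "\<And>v. v \<in> lists S \<Longrightarrow> v \<doteq> w \<Longrightarrow> length u \<le> length v"
    using reduced_exists_over[OF w] by blast
  have "reduced u" unfolding reduced_def
  proof (intro conjI allI impI)
    fix v assume "v \<doteq> u"
    then have "v \<doteq> w" using u(2) by (rule eqv_trans)
    then show "length u \<le> length v" using u(3) eqv_lists(1) by blast
  qed (rule u(1))
  then show ?thesis using u by blast
qed

lemma reduced_Cons: "reduced (s # w) \<Longrightarrow> reduced w"
proof -
  assume r: "reduced (s # w)"
  have sw: "s \<in> S" "w \<in> lists S" using r by (auto simp: reduced_def)
  { fix u assume u: "u \<doteq> w"
    have "s # u \<doteq> s # w" using eqv_ctx[OF u, of "[s]" "[]"] sw by simp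
    then have "length (s # w) \<le> length (s # u)" using r unfolding reduced_def by blast
    then have "length w \<le> length u" by simp }
  then show ?thesis using sw by (simp add: reduced_def)
qed

lemma reduced_eqv_len: "reduced w \<Longrightarrow> u \<doteq> w \<Longrightarrow> length u = length w \<Longrightarrow> reduced u"
  unfolding reduced_def
proof (intro conjI allI impI)
  fix v assume a: "w \<in> lists S \<and> (\<forall>u. u \<doteq> w \<longrightarrow> length w \<le> length u)" "u \<doteq> w" "length u = length w" "v \<doteq> u"
  have "v \<doteq> w" using a(4) a(2) by (rule eqv_trans)
  then show "length u \<le> length v" using a by simp
next
  assume "u \<doteq> w" then show "u \<in> lists S" by (rule eqv_lists)
qed

lemma decomp2:
  assumes "p < q" "q < length w"
  shows "\<exists>a x b y c. w = a @ [x] @ b @ [y] @ c \<and> length a = p \<and> length a + 1 + length b = q"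
proof -
  let ?r = "drop (Suc p) w" and ?j = "q - Suc p"
  have p: "p < length w" using assms by simp
  have j: "?j < length ?r" using assms by simp
  have w1: "w = take p w @ [w ! p] @ ?r" using id_take_nth_drop[OF p] by simp
  have r1: "?r = take ?j ?r @ [?r ! ?j] @ drop (Suc ?j) ?r" using id_take_nth_drop[OF j] by simp
  have "w = take p w @ [w ! p] @ take ?j ?r @ [?r ! ?j] @ drop (Suc ?j) ?r"
    using w1 r1 by (metis append.assoc)
  moreover have "length (take p w) = p" using p by simp
  moreover have "length (take ?j ?r) = ?j" using j by simp
  ultimately show ?thesis using assms by (intro exI[of _ "take p w"] exI[of _ "w ! p"] exI[of _ "take ?j ?r"]
        exI[of _ "?r ! ?j"] exI[of _ "drop (Suc ?j) ?r"]) auto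
qed

lemma pair_core:
  assumes l: "a \<in> lists S" "b \<in> lists S" "c \<in> lists S" "x \<in> S" "y \<in> S"
    and h: "a @ [x] @ rev a \<doteq> a @ [x] @ b @ [y] @ rev b @ [x] @ rev a"
  shows "a @ [x] @ b @ [y] @ c \<doteq> a @ b @ c"
proof -
  have h1: "a @ ([x] @ rev a) \<doteq> a @ ([x] @ b @ [y] @ rev b @ [x] @ rev a)" using h by simp
  have h2: "([x]) @ rev a \<doteq> ([x] @ b @ [y] @ rev b @ [x]) @ rev a"
    using cancel_left[OF l(1) h1] by simp
  have h3: "[x] @ [] \<doteq> [x] @ (b @ [y] @ rev b @ [x])"
    using cancel_right[OF _ h2] l by simp
  have h4: "[] \<doteq> b @ [y] @ rev b @ [x]" using cancel_left[OF _ h3] l by simp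
  have bl: "b @ [y] \<in> lists S" using l by simp
  have "b @ [y] \<doteq> (b @ [y]) @ (rev b @ [x, x] @ b)"
  proof -
    have "rev b @ [x, x] @ b \<doteq> rev b @ [] @ b" using eqv_ctx[OF eqv_ii[OF l(4)], of "rev b" b] l by simp
    also have "rev b @ [] @ b \<doteq> []" using rev_cancel[OF l(2)] by simp
    finally have e: "rev b @ [x, x] @ b \<doteq> []" .
    have "(b @ [y]) @ (rev b @ [x, x] @ b) @ [] \<doteq> (b @ [y]) @ [] @ []"
      using eqv_ctx[OF e, of "b @ [y]" "[]"] bl by simp
    then show ?thesis using eqv_sym by simp
  qed
  also have "(b @ [y]) @ (rev b @ [x, x] @ b) = (b @ [y] @ rev b @ [x]) @ [x] @ b" by simp
  also have "\<dots> \<doteq> [] @ [x] @ b"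
  proof -
    have xb: "[x] @ b \<in> lists S" using l by simp
    show ?thesis using eqv_app[OF eqv_sym[OF h4] eqv_refl[OF xb]] by simp
  qed
  finally have hb: "b @ [y] \<doteq> [x] @ b" by simp
  have "a @ [x] @ b @ [y] @ c = a @ ([x] @ b) @ [y] @ c" by simp
  also have "\<dots> \<doteq> a @ (b @ [y]) @ [y] @ c" using eqv_ctx[OF eqv_sym[OF hb], of a "[y] @ c"] l by simp
  also have "a @ (b @ [y]) @ [y] @ c = (a @ b) @ [y, y] @ c" by simp
  also have "\<dots> \<doteq> (a @ b) @ [] @ c" using eqv_ctx[OF eqv_ii[OF l(5)], of "a @ b" c] l by simp
  finally show ?thesis by simp
qed

lemma pair_del:
  assumes w: "w \<in> lists A" "A \<subseteq> S" and pq: "p < q" "q < length w" and e: "rf w p \<doteq> rf w q"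
  shows "\<exists>u \<in> lists A. u \<doteq> w \<and> length u + 2 = length w"
proof -
  obtain a x b y c where d: "w = a @ [x] @ b @ [y] @ c" "length a = p" "length a + 1 + length b = q"
    using decomp2[OF pq] by blast
  have lA: "a \<in> lists A" "b \<in> lists A" "c \<in> lists A" "x \<in> A" "y \<in> A" using w d by auto
  have l: "a \<in> lists S" "b \<in> lists S" "c \<in> lists S" "x \<in> S" "y \<in> S" using lA w(2) by auto
  have "rf w p = a @ [x] @ rev a" using d by (simp add: rf_def nth_append)
  moreover have "rf w q = a @ [x] @ b @ [y] @ rev b @ [x] @ rev a"
  proof -
    have w2: "w = (a @ [x] @ b) @ (y # c)" using d by simp
    have q2: "q = length (a @ [x] @ b)" using d by simp
    have "take q w = a @ [x] @ b" unfolding w2 q2 by simp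
    moreover have "w ! q = y" unfolding w2 q2 by (rule nth_append_length)
    ultimately show ?thesis by (simp add: rf_def)
  qed
  ultimately have "a @ [x] @ b @ [y] @ c \<doteq> a @ b @ c" using pair_core[OF l] e by simp
  then have "a @ b @ c \<doteq> w" using d(1) eqv_sym by simp
  then show ?thesis using d lA by (intro bexI[of _ "a @ b @ c"]) auto
qed

lemma reduced_Cons_intro:
  assumes r: "reduced w" and s: "s \<in> S" and np: "\<not> par w [s]"
  shows "reduced (s # w)"
proof (rule ccontr)
  assume "\<not> reduced (s # w)"
  moreover have sw: "s # w \<in> lists S" using r s by (simp add: reduced_def)
  ultimately obtain u where u: "u \<doteq> s # w" "length u < length (s # w)" unfolding reduced_def by force
  have "even (length u) = even (length (s # w))" using eqv_length_parity[OF u(1)] .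
  then have lu: "length u + 1 < length (s # w)" using u(2)
    by (metis Suc_eq_plus1 Suc_lessI even_Suc)
  have "par (s # w) [s]" using par_Cons_s[OF s] np r by (simp add: reduced_def)
  then have "par u [s]" using par_eqv[OF u(1)] s by simp
  then obtain p where p: "p < length u" "[s] @ u \<doteq> del p u" using exchange eqv_lists[OF u(1)] by blast
  have "s # s # w \<doteq> w" using eqv_Cons_cancel[of s w] s r by (simp add: reduced_def)
  then have "w \<doteq> [s] @ s # w" using eqv_sym by simp
  also have "[s] @ s # w \<doteq> [s] @ u" using eqv_ctx[OF eqv_sym[OF u(1)], of "[s]" "[]"] s by simp
  also have "[s] @ u \<doteq> del p u" by (rule p(2))
  finally have "length w \<le> length (del p u)" using r by (simp add: reduced_def eqv_sym)
  then show False using lu p(1) del_len[OF p(1)] by simp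
qed

lemma nonred: "w \<in> lists S \<Longrightarrow> \<not> reduced w \<Longrightarrow> \<exists>p q. p < q \<and> q < length w \<and> rf w p \<doteq> rf w q"
proof (induction w)
  case Nil
  then show ?case by (simp add: reduced_def)
next
  case (Cons s w)
  have s: "s \<in> S" "w \<in> lists S" using Cons by auto
  show ?case
  proof (cases "reduced w")
    case False
    then obtain p q where pq: "p < q" "q < length w" "rf w p \<doteq> rf w q" using Cons s by blast
    have "rf (s # w) (Suc p) \<doteq> rf (s # w) (Suc q)"
      unfolding rf_Cons_Suc using eqv_ctx[OF pq(3), of "[s]" "[s]"] s by simp
    then show ?thesis using pq by (intro exI[of _ "Suc p"] exI[of _ "Suc q"]) auto
  next
    case True
    then have "par w [s]" using reduced_Cons_intro[OF True s(1)] Cons by blast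
    then obtain p where p: "p < length w" "rf w p \<doteq> [s]" using par_ex by blast
    have "rf (s # w) (Suc p) \<doteq> [s, s, s]"
      unfolding rf_Cons_Suc using eqv_ctx[OF p(2), of "[s]" "[s]"] s by simp
    also have "[s, s, s] \<doteq> [s]" by (rule sss[OF s(1)])
    finally have "rf (s # w) 0 \<doteq> rf (s # w) (Suc p)" unfolding rf_Cons_0 by (rule eqv_sym)
    then show ?thesis using p by (intro exI[of _ 0] exI[of _ "Suc p"]) auto
  qed
qed

lemma reduced_over: "w \<in> lists A \<Longrightarrow> A \<subseteq> S \<Longrightarrow> \<exists>u \<in> lists A. u \<doteq> w \<and> reduced u"
proof -
  assume w: "w \<in> lists A" "A \<subseteq> S"
  obtain u where u: "u \<in> lists A" "u \<doteq> w" "\<And>v. v \<in> lists A \<Longrightarrow> v \<doteq> w \<Longrightarrow> length u \<le> length v"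
    using reduced_exists_over[OF w] by blast
  have "reduced u"
  proof (rule ccontr)
    assume "\<not> reduced u"
    then obtain p q where pq: "p < q" "q < length u" "rf u p \<doteq> rf u q"
      using nonred eqv_lists[OF u(2)] by blast
    then obtain v where v: "v \<in> lists A" "v \<doteq> u" "length v + 2 = length u"
      using pair_del[OF u(1) w(2)] by blast
    have "length u \<le> length v" using u(3)[OF v(1) eqv_trans[OF v(2) u(2)]] .
    then show False using v(3) by simp
  qed
  then show ?thesis using u by blast
qed

lemma reduced_par_rf: "reduced w \<Longrightarrow> p < length w \<Longrightarrow> par w (rf w p)"
proof -
  assume r: "reduced w" and p: "p < length w"
  have w: "w \<in> lists S" using r by (simp add: reduced_def)
  have "{q. q < length w \<and> rf w q \<doteq> rf w p} = {p}"
  proof (intro equalityI subsetI)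
    fix q assume q: "q \<in> {q. q < length w \<and> rf w q \<doteq> rf w p}"
    show "q \<in> {p}"
    proof (rule ccontr)
      assume "q \<notin> {p}"
      then have "p < q \<or> q < p" by auto
      then obtain p' q' where "p' < q'" "q' < length w" "rf w p' \<doteq> rf w q'"
      proof
        assume "p < q" then show ?thesis using that[of p q] q p eqv_sym[of "rf w q" "rf w p"] by simp
      next
        assume "q < p" then show ?thesis using that[of q p] q p by simp
      qed
      then obtain u where u: "u \<doteq> w" "length u + 2 = length w"
        using pair_del[OF w order_refl] by blast
      then show False using r by (auto simp: reduced_def)
    qed
  next
    fix q assume "q \<in> {p}"
    then show "q \<in> {q. q < length w \<and> rf w q \<doteq> rf w p}"
      using p rf_lists[OF w p] by auto
  qed
  then show ?thesis unfolding par_def ct_def by simp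
qed

lemma support: "reduced w \<Longrightarrow> w \<doteq> u \<Longrightarrow> u \<in> lists A \<Longrightarrow> w \<in> lists A"
proof (induction w arbitrary: u)
  case Nil then show ?case by simp
next
  case (Cons s w)
  have s: "s \<in> S" "w \<in> lists S" using Cons(2) by (auto simp: reduced_def)
  have "par (s # w) [s]" using reduced_par_rf[OF Cons(2), of 0] by (simp add: rf_Cons_0)
  then have "par u [s]" using par_eqv[OF Cons(3)] s by simp
  then obtain p where p: "p < length u" "rf u p \<doteq> [s]" using par_ex by blast
  have "rf u p \<in> lists A" using rf_lists'[OF Cons(4) p(1)] .
  then have sA: "s \<in> A" using gen_not_in_sub[OF s(1) eqv_sym[OF p(2)]] by simp
  have uS: "u \<in> lists S" using eqv_lists[OF Cons(3)] by simp
  have "[s] @ u \<doteq> rf u p @ u" using eqv_app[OF eqv_sym[OF p(2)] eqv_refl[OF uS]] .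
  also have "\<dots> \<doteq> del p u" by (rule rf_del[OF uS p(1)])
  finally have e1: "[s] @ u \<doteq> del p u" .
  have "s # s # w \<doteq> w" using eqv_Cons_cancel[of s w] s by simp
  then have "w \<doteq> [s] @ s # w" using eqv_sym by simp
  also have "[s] @ s # w \<doteq> [s] @ u" using eqv_ctx[OF Cons(3), of "[s]" "[]"] s by simp
  also have "[s] @ u \<doteq> del p u" by (rule e1)
  finally have "w \<in> lists A" using Cons.IH reduced_Cons[OF Cons(2)] del_lists[OF Cons(4)] by blast
  then show ?case using sA by simp
qed

lemma para_inter: "w \<doteq> a \<Longrightarrow> a \<in> lists A \<Longrightarrow> w \<doteq> b \<Longrightarrow> b \<in> lists B \<Longrightarrow> \<exists>c \<in> lists (A \<inter> B). c \<doteq> w"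
proof -
  assume h: "w \<doteq> a" "a \<in> lists A" "w \<doteq> b" "b \<in> lists B"
  obtain c where c: "c \<doteq> w" "reduced c" using reduced_exists eqv_lists[OF h(1)] by blast
  have "c \<in> lists A" using support[OF c(2) eqv_trans[OF c(1) h(1)] h(2)] .
  moreover have "c \<in> lists B" using support[OF c(2) eqv_trans[OF c(1) h(3)] h(4)] .
  ultimately show ?thesis using c by auto
qed

end

context cox begin

lemma stp_rev: "(u, v) \<in> stp \<Longrightarrow> (rev u, rev v) \<in> stp"
proof -
  assume "(u, v) \<in> stp"
  then obtain x y i j n where e: "u = x @ alt i j (2*n) @ y" "v = x @ y" "i \<in> S" "j \<in> S" "M i j = enat n"
    unfolding cox_step_def by blast
  have "M j i = enat n" using e M_sym by simp
  moreover have "rev u = rev y @ alt j i (2*n) @ rev x" using e rev_alt_even by simp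
  moreover have "rev v = rev y @ rev x" using e by simp
  ultimately show ?thesis unfolding cox_step_def using e by blast
qed

lemma eqv_rev: "u \<doteq> v \<Longrightarrow> rev u \<doteq> rev v"
proof -
  assume a: "u \<doteq> v"
  have "(u, v) \<in> (stp \<union> stp\<inverse>)\<^sup>*" using a by (simp add: eqv_def')
  then have "(rev u, rev v) \<in> (stp \<union> stp\<inverse>)\<^sup>*"
  proof (induction rule: rtrancl_induct)
    case base then show ?case by simp
  next
    case (step b c)
    have "(rev b, rev c) \<in> stp \<union> stp\<inverse>" using step(2) stp_rev by auto
    then show ?case using step(3) by (rule rtrancl_into_rtrancl[rotated])
  qed
  then show ?thesis using a by (simp add: eqv_def')
qed

lemma reduced_rev: "reduced w \<Longrightarrow> reduced (rev w)"
proof -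
  assume r: "reduced w"
  { fix u assume "u \<doteq> rev w"
    then have "rev u \<doteq> w" using eqv_rev by fastforce
    then have "length w \<le> length (rev u)" using r unfolding reduced_def by blast
    then have "length (rev w) \<le> length u" by simp }
  then show ?thesis using r by (simp add: reduced_def)
qed

lemma reduced_single: "r \<in> S \<Longrightarrow> reduced [r]"
proof -
  assume r: "r \<in> S"
  { fix u assume u: "u \<doteq> [r]"
    have "u \<noteq> []"
    proof
      assume "u = []"
      then have "[r] \<doteq> []" using eqv_sym[OF u] by simp
      then show False using gen_not_in_sub[OF r, of "[]" "{}"] by simp
    qed
    then have "length [r] \<le> length u" by (cases u) auto }
  then show ?thesis using r by (simp add: reduced_def)
qed

lemma K1: "reduced g \<Longrightarrow> g \<in> lists A \<Longrightarrow> s \<in> S \<Longrightarrow> s \<notin> A \<Longrightarrow> reduced (s # g)"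
proof -
  assume a: "reduced g" "g \<in> lists A" "s \<in> S" "s \<notin> A"
  have "\<not> par g [s]"
  proof
    assume "par g [s]"
    then obtain p where p: "p < length g" "rf g p \<doteq> [s]" using par_ex by blast
    have "rf g p \<in> lists A" using rf_lists'[OF a(2) p(1)] .
    then show False using gen_not_in_sub[OF a(3) eqv_sym[OF p(2)]] a(4) by simp
  qed
  then show ?thesis using reduced_Cons_intro a by blast
qed

lemma CK:
  assumes g: "g \<in> lists A" "reduced g" and s: "s \<in> S" "s \<notin> A"
    and h: "[s] @ g @ [s] \<doteq> b" and b: "b \<in> lists A"
  shows "[s] @ g \<doteq> g @ [s]"
proof -
  have gS: "g \<in> lists S" using g(2) by (simp add: reduced_def)
  have "reduced (s # rev g)" using K1[OF reduced_rev[OF g(2)] _ s] g(1) by simp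
  then have r1: "reduced (g @ [s])" using reduced_rev by fastforce
  have nr: "\<not> reduced (s # (g @ [s]))"
  proof
    assume R: "reduced (s # (g @ [s]))"
    have "[s] @ g @ [s] \<in> lists A" using support[of "[s] @ g @ [s]" b A] h b R by simp
    then show False using s by simp
  qed
  have "par (g @ [s]) [s]" using reduced_Cons_intro[OF r1 s(1)] nr by blast
  then obtain p where p: "p < length (g @ [s])" "[s] @ (g @ [s]) \<doteq> del p (g @ [s])"
    using exchange gS s by fastforce
  show ?thesis
  proof (cases "p = length g")
    case True
    then have e: "[s] @ g @ [s] \<doteq> g" using p(2) by (simp add: del_def)
    have "[s] @ g \<doteq> ([s] @ g) @ [s, s]"
      using eqv_sym[OF eqv_ctx[OF eqv_ii[OF s(1)], of "[s] @ g" "[]"]] s gS by simp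
    also have "([s] @ g) @ [s, s] = ([s] @ g @ [s]) @ [s]" by simp
    also have "\<dots> \<doteq> g @ [s]" using eqv_app[OF e eqv_refl[of "[s]"]] s by simp
    finally show ?thesis .
  next
    case False
    then have pg: "p < length g" using p(1) by simp
    then have "del p (g @ [s]) = del p g @ [s]" by (simp add: del_def)
    then have h5: "([s] @ g) @ [s] \<doteq> del p g @ [s]" using p(2) by simp
    have e: "[s] @ g \<doteq> del p g" using cancel_right[OF _ h5] s by simp
    have "[s] \<doteq> [s] @ (g @ rev g)"
      using eqv_sym[OF eqv_ctx[OF rev_cancel2[OF gS], of "[s]" "[]"]] s by simp
    also have "[s] @ (g @ rev g) = ([s] @ g) @ rev g" by simp
    also have "\<dots> \<doteq> del p g @ rev g" using eqv_app[OF e eqv_refl[of "rev g"]] gS by simp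
    finally have "[s] \<doteq> del p g @ rev g" .
    moreover have "del p g @ rev g \<in> lists A" using del_lists[OF g(1)] g(1) by simp
    ultimately show ?thesis using gen_not_in_sub[OF s(1)] s(2) by blast
  qed
qed

definition comm_set :: "nat set \<Rightarrow> nat \<Rightarrow> nat set" where
  "comm_set A s = {r \<in> A. [r, s] \<doteq> [s, r]}"

lemma K2:
  assumes s: "s \<in> S" "s \<notin> A"
  shows "g \<in> lists A \<Longrightarrow> reduced g \<Longrightarrow> [s] @ g \<doteq> g @ [s] \<Longrightarrow> g \<in> lists (comm_set A s)"
proof (induction g)
  case Nil then show ?case by simp
next
  case (Cons r g')
  have rA: "r \<in> A" "g' \<in> lists A" using Cons by auto
  have rS: "r \<in> S" "g' \<in> lists S" using Cons(3) by (auto simp: reduced_def)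
  let ?X = "s # r # g'" and ?Y = "r # g' @ [s]"
  have rX: "reduced ?X" using K1[OF Cons(3) Cons(2) s] .
  have YX: "?Y \<doteq> ?X" using eqv_sym[OF Cons(4)] by simp
  have rY: "reduced ?Y" using reduced_eqv_len[OF rX YX] by simp
  have "par ?Y [r]" using reduced_par_rf[OF rY, of 0] by (simp add: rf_Cons_0)
  then have "par ?X [r]" using par_eqv[OF YX] rS by simp
  then obtain p where p: "p < length ?X" "rf ?X p \<doteq> [r]" using par_ex by blast
  have comm: "[s] @ [r] \<doteq> [r] @ [s]"
  proof (cases p)
    case 0
    then have "[s] \<doteq> [r]" using p(2) by (simp add: rf_Cons_0)
    then have "s \<in> A" using gen_not_in_sub[OF s(1)] rA by fastforce
    then show ?thesis using s by simp
  next
    case (Suc p')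
    let ?t = "rf (r # g') p'"
    have p': "p' < length (r # g')" using p(1) Suc by simp
    have tA: "?t \<in> lists A" using rf_lists'[OF Cons(2) p'] .
    have tS: "?t \<in> lists S" using rf_lists[OF _ p'] rS by simp
    have "[s] @ ?t @ rev [s] \<doteq> [r]" using p(2) Suc by (simp add: rf_Cons_Suc)
    then have "?t \<doteq> rev [s] @ [r] @ [s]" using conj_iff[of "[s]" ?t "[r]"] s tS by simp
    then have "[s] @ [r] @ [s] \<doteq> ?t" using eqv_sym by simp
    then show ?thesis using CK[OF _ reduced_single[OF rS(1)] s _ tA] rA by simp
  qed
  have "[r] @ [s] @ g' \<doteq> [s] @ [r] @ g'"
    using eqv_app[OF eqv_sym[OF comm] eqv_refl[OF rS(2)]] by simp
  also have "[s] @ [r] @ g' \<doteq> [r] @ (g' @ [s])" using Cons(4) by simp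
  finally have fr: "[r] @ ([s] @ g') \<doteq> [r] @ (g' @ [s])" by simp
  have "[s] @ g' \<doteq> g' @ [s]" using cancel_left[OF _ fr] rS by simp
  then have "g' \<in> lists (comm_set A s)" using Cons.IH[OF rA(2) reduced_Cons[OF Cons(3)]] by simp
  moreover have "r \<in> comm_set A s" unfolding comm_set_def using rA eqv_sym[OF comm] by simp
  ultimately show ?case by simp
qed

lemma kilmoyer:
  assumes A: "A \<subseteq> S" and g: "g \<in> lists A" and s: "s \<in> S" "s \<notin> A"
    and b: "b \<in> lists A" and h: "[s] @ g @ [s] \<doteq> b"
  shows "\<exists>c \<in> lists (comm_set A s). c \<doteq> g"
proof -
  obtain g0 where g0: "g0 \<in> lists A" "g0 \<doteq> g" "reduced g0" using reduced_over[OF g A] by blast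
  have "[s] @ g0 @ [s] \<doteq> [s] @ g @ [s]" using eqv_ctx[OF g0(2), of "[s]" "[s]"] s by simp
  then have "[s] @ g0 @ [s] \<doteq> b" using h by (rule eqv_trans)
  then have "[s] @ g0 \<doteq> g0 @ [s]" using CK[OF g0(1) g0(3) s _ b] by simp
  then have "g0 \<in> lists (comm_set A s)" using K2[OF s g0(1) g0(3)] by simp
  then show ?thesis using g0 by blast
qed

end

context cox begin

definition cls :: "nat list \<Rightarrow> nat list set" where
  "cls w = cox_rel M {..k} `` {w}"

lemma cls_mem: "u \<in> cls w \<longleftrightarrow> w \<doteq> u"
  by (simp add: cls_def eqv_def)

lemma cls_eq: "u \<doteq> v \<Longrightarrow> cls u = cls v"
  unfolding cls_mem[symmetric, THEN eq_reflection] set_eq_iff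
  using eqv_trans eqv_sym by (meson cls_mem)

lemma cls_eqD: "cls u = cls v \<Longrightarrow> u \<in> lists S \<Longrightarrow> u \<doteq> v"
proof -
  assume "cls u = cls v" "u \<in> lists S"
  then have "u \<in> cls v" using cls_mem eqv_refl by blast
  then show ?thesis using cls_mem eqv_sym by blast
qed

definition Wfin :: "nat set \<Rightarrow> bool" where
  "Wfin A \<longleftrightarrow> finite (cls ` lists A)"

definition cos :: "nat set \<Rightarrow> nat list \<Rightarrow> nat list set" where
  "cos A g = {h. \<exists>a \<in> lists A. a @ g \<doteq> h}"

definition FI :: "nat set \<Rightarrow> nat set \<Rightarrow> bool" where
  "FI I A \<longleftrightarrow> finite (cos A ` lists I)"

lemma cos_crit:
  assumes B: "B \<subseteq> S" and g: "g \<in> lists S" "g' \<in> lists S"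
  shows "cos B g = cos B g' \<longleftrightarrow> (\<exists>c \<in> lists B. c @ g' \<doteq> g)"
proof
  assume "cos B g = cos B g'"
  moreover have "g \<in> cos B g" unfolding cos_def using g by (intro CollectI bexI[of _ "[]"]) auto
  ultimately show "\<exists>c \<in> lists B. c @ g' \<doteq> g" unfolding cos_def by auto
next
  assume "\<exists>c \<in> lists B. c @ g' \<doteq> g"
  then obtain c where c: "c \<in> lists B" "c @ g' \<doteq> g" by blast
  have cS: "c \<in> lists S" using c B by auto
  have g'e: "rev c @ g \<doteq> g'"
  proof -
    have "rev c @ g \<doteq> rev c @ (c @ g')" using eqv_ctx[OF eqv_sym[OF c(2)], of "rev c" "[]"] cS by simp
    also have "rev c @ (c @ g') = (rev c @ c) @ g'" by simp
    also have "\<dots> \<doteq> [] @ g'" using eqv_app[OF rev_cancel[OF cS] eqv_refl[OF g(2)]] .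
    finally show ?thesis by simp
  qed
  show "cos B g = cos B g'"
  proof (intro equalityI subsetI)
    fix h assume "h \<in> cos B g"
    then obtain a where a: "a \<in> lists B" "a @ g \<doteq> h" unfolding cos_def by blast
    have aS: "a \<in> lists S" using a B by auto
    have "(a @ c) @ g' \<doteq> a @ g" using eqv_ctx[OF c(2), of a "[]"] aS by simp
    then have "(a @ c) @ g' \<doteq> h" using a(2) by (rule eqv_trans)
    moreover have "a @ c \<in> lists B" using a c by simp
    ultimately show "h \<in> cos B g'" unfolding cos_def by blast
  next
    fix h assume "h \<in> cos B g'"
    then obtain a where a: "a \<in> lists B" "a @ g' \<doteq> h" unfolding cos_def by blast
    have aS: "a \<in> lists S" using a B by auto
    have "(a @ rev c) @ g \<doteq> a @ g'" using eqv_ctx[OF g'e, of a "[]"] aS by simp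
    then have "(a @ rev c) @ g \<doteq> h" using a(2) by (rule eqv_trans)
    moreover have "a @ rev c \<in> lists B" using a c by simp
    ultimately show "h \<in> cos B g" unfolding cos_def by blast
  qed
qed

lemma finite_via_rep:
  assumes fin: "finite (f ` Dd)"
    and key: "\<And>g g'. g \<in> Ee \<Longrightarrow> g' \<in> Ee \<Longrightarrow> f (h g) = f (h g') \<Longrightarrow> ef g = ef g'"
    and hD: "\<And>g. g \<in> Ee \<Longrightarrow> h g \<in> Dd"
  shows "finite (ef ` Ee)"
proof -
  let ?F = "\<lambda>C. ef (SOME g. g \<in> Ee \<and> f (h g) = C)"
  have "ef ` Ee \<subseteq> ?F ` (f ` Dd)"
  proof
    fix x assume "x \<in> ef ` Ee"
    then obtain g where g: "g \<in> Ee" "x = ef g" by blast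
    let ?g = "SOME g'. g' \<in> Ee \<and> f (h g') = f (h g)"
    have "?g \<in> Ee \<and> f (h ?g) = f (h g)" by (rule someI[of _ g]) (use g in simp)
    then have "ef ?g = ef g" using key g by blast
    then show "x \<in> ?F ` (f ` Dd)" using g hD by (intro image_eqI[of _ _ "f (h g)"]) auto
  qed
  then show ?thesis by (rule finite_subset[OF _ finite_imageI[OF fin]])
qed

lemma FI_restrict:
  assumes I: "I \<subseteq> S" and Xs: "Xs \<subseteq> I" and J: "J \<subseteq> S" and fi: "FI I J"
  shows "FI Xs (Xs \<inter> J)"
  unfolding FI_def
proof (rule finite_via_rep[where f = "cos J" and Dd = "lists I" and h = id])
  show "finite (cos J ` lists I)" using fi by (simp add: FI_def)
next
  fix g assume "g \<in> lists Xs" then show "id g \<in> lists I" using Xs by auto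
next
  fix g g' assume g: "g \<in> lists Xs" "g' \<in> lists Xs" and e: "cos J (id g) = cos J (id g')"
  have gS: "g \<in> lists S" "g' \<in> lists S" using g Xs I by auto
  obtain c where c: "c \<in> lists J" "c @ g' \<doteq> g" using e cos_crit[OF J gS] by auto
  have cS: "c \<in> lists S" using c J by auto
  have "c \<doteq> g @ rev g'"
  proof -
    have "c \<doteq> c @ (g' @ rev g')" using eqv_sym[OF eqv_ctx[OF rev_cancel2[OF gS(2)], of c "[]"]] cS by simp
    also have "c @ (g' @ rev g') = (c @ g') @ rev g'" by simp
    also have "\<dots> \<doteq> g @ rev g'" using eqv_app[OF c(2) eqv_refl[of "rev g'"]] gS by simp
    finally show ?thesis .
  qed
  moreover have "g @ rev g' \<in> lists Xs" using g by simp
  ultimately obtain d where d: "d \<in> lists (J \<inter> Xs)" "d \<doteq> c"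
    using para_inter[OF eqv_refl[OF cS] c(1)] by blast
  have "d @ g' \<doteq> g" using eqv_trans[OF eqv_app[OF d(2) eqv_refl[OF gS(2)]] c(2)] .
  then show "cos (Xs \<inter> J) g = cos (Xs \<inter> J) g'"
    using cos_crit[of "Xs \<inter> J" g g'] gS d(1) Xs I by (auto simp: Int_commute)
qed

lemma FI_kil:
  assumes I: "I \<subseteq> S" and J: "J \<subseteq> I" and s: "s \<in> I" "s \<notin> J" and fi: "FI I J"
  shows "FI J (comm_set J s)"
  unfolding FI_def
proof (rule finite_via_rep[where f = "cos J" and Dd = "lists I" and h = "\<lambda>g. s # g"])
  show "finite (cos J ` lists I)" using fi by (simp add: FI_def)
next
  fix g assume "g \<in> lists J" then show "s # g \<in> lists I" using J s by auto
next
  have JS: "J \<subseteq> S" using I J by auto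
  have sS: "s \<in> S" using s I by auto
  have cJ: "comm_set J s \<subseteq> S" using JS by (auto simp: comm_set_def)
  fix g g' assume g: "g \<in> lists J" "g' \<in> lists J" and e: "cos J (s # g) = cos J (s # g')"
  have gS: "g \<in> lists S" "g' \<in> lists S" using g JS by auto
  obtain c where c: "c \<in> lists J" "c @ s # g' \<doteq> s # g" using e cos_crit[OF JS, of "s # g" "s # g'"] gS sS by auto
  have cS: "c \<in> lists S" using c JS by auto
  have hk: "[s] @ (g @ rev g') @ [s] \<doteq> c"
  proof -
    have "[s] @ (g @ rev g') @ [s] = (s # g) @ (rev g' @ [s])" by simp
    also have "\<dots> \<doteq> (c @ s # g') @ (rev g' @ [s])"
      using eqv_app[OF eqv_sym[OF c(2)] eqv_refl[of "rev g' @ [s]"]] gS sS by simp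
    also have "(c @ s # g') @ (rev g' @ [s]) = (c @ [s]) @ (g' @ rev g') @ [s]" by simp
    also have "\<dots> \<doteq> (c @ [s]) @ [] @ [s]" using eqv_ctx[OF rev_cancel2[OF gS(2)], of "c @ [s]" "[s]"] cS sS by simp
    also have "(c @ [s]) @ [] @ [s] = c @ [s, s] @ []" by simp
    also have "\<dots> \<doteq> c @ [] @ []" using eqv_ctx[OF eqv_ii[OF sS], of c "[]"] cS by simp
    finally show ?thesis by simp
  qed
  have glist: "g @ rev g' \<in> lists J" using g by simp
  obtain d where d: "d \<in> lists (comm_set J s)" "d \<doteq> g @ rev g'"
    using kilmoyer[OF JS glist sS s(2) c(1) hk] by blast
  have "d @ g' \<doteq> g"
  proof -
    have "d @ g' \<doteq> (g @ rev g') @ g'" using eqv_app[OF d(2) eqv_refl[OF gS(2)]] .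
    also have "(g @ rev g') @ g' = g @ (rev g' @ g')" by simp
    also have "\<dots> \<doteq> g @ []" using eqv_ctx[OF rev_cancel[OF gS(2)], of g "[]"] gS by simp
    finally show ?thesis by simp
  qed
  then show "cos (comm_set J s) g = cos (comm_set J s) g'"
    using cos_crit[OF cJ gS] d(1) by blast
qed

lemma Wfin_FI:
  assumes I: "I \<subseteq> S" and J: "J \<subseteq> S" and fi: "FI I J" and wj: "Wfin J"
  shows "Wfin I"
proof -
  define rep where "rep = (\<lambda>C. SOME a. a \<in> lists J \<and> cls a = C)"
  define rep' where "rep' = (\<lambda>D. SOME g. g \<in> lists I \<and> cos J g = D)"
  define F where "F = (\<lambda>(C, D). cls (rep C @ rep' D))"
  have "cls ` lists I \<subseteq> F ` (cls ` lists J \<times> cos J ` lists I)"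
  proof
    fix x assume "x \<in> cls ` lists I"
    then obtain w where w: "w \<in> lists I" "x = cls w" by blast
    have wS: "w \<in> lists S" using w I by auto
    define g where "g = rep' (cos J w)"
    have g: "g \<in> lists I \<and> cos J g = cos J w" unfolding g_def rep'_def by (rule someI[of _ w]) (use w in simp)
    have gS: "g \<in> lists S" using g I by auto
    have "\<exists>c \<in> lists J. c @ g \<doteq> w" using g cos_crit[OF J wS gS] by simp
    then obtain a where a: "a \<in> lists J" "a @ g \<doteq> w" by blast
    define a' where "a' = rep (cls a)"
    have a': "a' \<in> lists J \<and> cls a' = cls a" unfolding a'_def rep_def by (rule someI[of _ a]) (use a in simp)
    have a'S: "a' \<in> lists S" using a' J by auto
    have "a' \<doteq> a" using cls_eqD[of a' a] a' a'S by blast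
    then have "a' @ g \<doteq> a @ g" using eqv_app[OF _ eqv_refl[OF gS]] by blast
    then have "a' @ g \<doteq> w" using a(2) by (rule eqv_trans)
    then have "cls (a' @ g) = cls w" by (rule cls_eq)
    then have "x = F (cls a, cos J w)" unfolding F_def using w by (simp add: a'_def g_def)
    moreover have "(cls a, cos J w) \<in> cls ` lists J \<times> cos J ` lists I" using a w by blast
    ultimately show "x \<in> F ` (cls ` lists J \<times> cos J ` lists I)" by blast
  qed
  moreover have "finite (cls ` lists J \<times> cos J ` lists I)"
    using wj fi by (simp add: Wfin_def FI_def)
  ultimately show ?thesis unfolding Wfin_def by (rule finite_subset[OF _ finite_imageI])
qed

lemma Wfin_mono: "A \<subseteq> B \<Longrightarrow> Wfin B \<Longrightarrow> Wfin A"
  unfolding Wfin_def by (rule finite_subset[rotated]) (auto intro: lists_mono[THEN subsetD])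

lemma Wfin_empty: "Wfin {}"
proof -
  have "lists {} = {[]}" by auto
  then show ?thesis by (simp add: Wfin_def)
qed

lemma comm_past:
  assumes AB: "\<forall>a\<in>A. \<forall>b\<in>B. [a, b] \<doteq> [b, a]" and x: "x \<in> B" and BS: "B \<subseteq> S" and AS: "A \<subseteq> S"
  shows "u \<in> lists A \<Longrightarrow> [x] @ u \<doteq> u @ [x]"
proof (induction u)
  case Nil
  have "x \<in> S" using x BS by auto
  then show ?case by (simp add: eqv_refl)
next
  case (Cons a u)
  have aS: "a \<in> A" "u \<in> lists A" using Cons by auto
  have l: "a \<in> S" "x \<in> S" "u \<in> lists S" using aS x BS AS by auto
  have "[x] @ a # u = [x, a] @ u" by simp
  also have "\<dots> \<doteq> [a, x] @ u" using eqv_app[OF eqv_sym[OF AB[rule_format, OF aS(1) x]] eqv_refl[OF l(3)]] .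
  also have "[a, x] @ u = [a] @ ([x] @ u)" by simp
  also have "\<dots> \<doteq> [a] @ (u @ [x])" using eqv_ctx[OF Cons.IH[OF aS(2)], of "[a]" "[]"] l by simp
  finally show ?case by simp
qed

lemma Wfin_prod:
  assumes AS: "A \<subseteq> S" and BS: "B \<subseteq> S" and AB: "\<forall>a\<in>A. \<forall>b\<in>B. [a, b] \<doteq> [b, a]"
    and wa: "Wfin A" and wb: "Wfin B"
  shows "Wfin (A \<union> B)"
proof -
  have dec: "w \<in> lists (A \<union> B) \<Longrightarrow> \<exists>u \<in> lists A. \<exists>v \<in> lists B. u @ v \<doteq> w" for w
  proof (induction w)
    case Nil then show ?case by (intro bexI[of _ "[]"]) auto
  next
    case (Cons x w)
    then obtain u v where uv: "u \<in> lists A" "v \<in> lists B" "u @ v \<doteq> w" by auto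
    have xS: "x \<in> S" using Cons AS BS by auto
    have uS: "u \<in> lists S" "v \<in> lists S" using uv AS BS by auto
    have e: "x # (u @ v) \<doteq> x # w" using eqv_ctx[OF uv(3), of "[x]" "[]"] xS by simp
    show ?case
    proof (cases "x \<in> A")
      case True
      have "(x # u) @ v \<doteq> x # w" using e by simp
      moreover have "x # u \<in> lists A" using uv True by simp
      ultimately show ?thesis using uv by blast
    next
      case False
      then have xB: "x \<in> B" using Cons by auto
      have "u @ (x # v) \<doteq> x # (u @ v)"
      proof -
        have "([x] @ u) @ v \<doteq> (u @ [x]) @ v" using eqv_app[OF comm_past[OF AB xB BS AS uv(1)] eqv_refl[OF uS(2)]] .
        then show ?thesis using eqv_sym by simp
      qed
      then have "u @ (x # v) \<doteq> x # w" using e by (rule eqv_trans)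
      moreover have "x # v \<in> lists B" using uv xB by simp
      ultimately show ?thesis using uv by blast
    qed
  qed
  let ?rep = "\<lambda>C. SOME a. a \<in> lists S \<and> cls a = C"
  let ?F = "\<lambda>(C, D). cls (?rep C @ ?rep D)"
  have "cls ` lists (A \<union> B) \<subseteq> ?F ` (cls ` lists A \<times> cls ` lists B)"
  proof
    fix x assume "x \<in> cls ` lists (A \<union> B)"
    then obtain w where w: "w \<in> lists (A \<union> B)" "x = cls w" by blast
    obtain u v where uv: "u \<in> lists A" "v \<in> lists B" "u @ v \<doteq> w" using dec[OF w(1)] by blast
    have uS: "u \<in> lists S" "v \<in> lists S" using uv AS BS by auto
    have ru: "?rep (cls u) \<in> lists S \<and> cls (?rep (cls u)) = cls u" by (rule someI[of _ u]) (use uS in simp)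
    have rv: "?rep (cls v) \<in> lists S \<and> cls (?rep (cls v)) = cls v" by (rule someI[of _ v]) (use uS in simp)
    have "?rep (cls u) \<doteq> u" "?rep (cls v) \<doteq> v" using cls_eqD ru rv by auto
    then have "?rep (cls u) @ ?rep (cls v) \<doteq> w" using eqv_trans[OF eqv_app uv(3)] by blast
    then have "cls (?rep (cls u) @ ?rep (cls v)) = cls w" by (rule cls_eq)
    then show "x \<in> ?F ` (cls ` lists A \<times> cls ` lists B)"
      using w uv by (intro image_eqI[of _ _ "(cls u, cls v)"]) auto
  qed
  moreover have "finite (cls ` lists A \<times> cls ` lists B)" using wa wb by (simp add: Wfin_def)
  ultimately show ?thesis unfolding Wfin_def by (rule finite_subset[OF _ finite_imageI])
qed

definition conn :: "nat set \<Rightarrow> bool" where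
  "conn Xs \<longleftrightarrow> \<not> (\<exists>P Q. P \<union> Q = Xs \<and> P \<inter> Q = {} \<and> P \<noteq> {} \<and> Q \<noteq> {} \<and> (\<forall>a\<in>P. \<forall>b\<in>Q. [a, b] \<doteq> [b, a]))"

lemma Wfin_conn:
  "finite J \<Longrightarrow> J \<subseteq> S \<Longrightarrow> (\<forall>Y \<subseteq> J. conn Y \<longrightarrow> Wfin Y) \<Longrightarrow> Wfin J"
proof (induction "card J" arbitrary: J rule: less_induct)
  case less
  show ?case
  proof (cases "conn J")
    case True then show ?thesis using less.prems by blast
  next
    case False
    then obtain P Q where PQ: "P \<union> Q = J" "P \<inter> Q = {}" "P \<noteq> {}" "Q \<noteq> {}" "\<forall>a\<in>P. \<forall>b\<in>Q. [a, b] \<doteq> [b, a]"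
      unfolding conn_def by blast
    have fin: "finite P" "finite Q" using PQ less.prems by auto
    have "card P < card J"
      using PQ fin by (metis Int_absorb1 Un_upper1 card_mono card_seteq less.prems(1) linorder_not_le subsetI sup_ge2)
    moreover have "card Q < card J"
      using PQ fin by (metis Int_absorb2 Un_upper2 card_mono card_seteq less.prems(1) linorder_not_le subsetI sup_ge1)
    moreover have PS: "P \<subseteq> S" "Q \<subseteq> S" using PQ less.prems by auto
    moreover have "\<forall>Y\<subseteq>P. conn Y \<longrightarrow> Wfin Y" "\<forall>Y\<subseteq>Q. conn Y \<longrightarrow> Wfin Y"
      using less.prems(3) PQ(1) by blast+
    ultimately have "Wfin P" "Wfin Q" using less.hyps fin by auto
    then show ?thesis using Wfin_prod[of P Q] PQ less.prems by auto
  qed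
qed

lemma conn_insert:
  assumes c: "conn Y" and z: "z \<notin> Y" and y: "y \<in> Y" "\<not> [y, z] \<doteq> [z, y]"
  shows "conn (insert z Y)"
proof -
  have key: False if PQ: "P \<union> Q = insert z Y" "P \<inter> Q = {}" "P \<noteq> {}" "Q \<noteq> {}"
      "\<forall>a\<in>P. \<forall>b\<in>Q. [a, b] \<doteq> [b, a]" "z \<in> P" for P Q
  proof -
    have QY: "Q \<subseteq> Y" using PQ z by auto
    show False
    proof (cases "P \<inter> Y = {}")
      case True
      then have "y \<in> Q" using PQ y by auto
      then have "[z, y] \<doteq> [y, z]" using PQ(5,6) by blast
      then show False using y(2) eqv_sym[of "[z, y]" "[y, z]"] by simp
    next
      case False
      have "(P \<inter> Y) \<union> Q = Y" "(P \<inter> Y) \<inter> Q = {}" using PQ QY z by auto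
      moreover have "\<forall>a\<in>P \<inter> Y. \<forall>b\<in>Q. [a, b] \<doteq> [b, a]" using PQ(5) by blast
      ultimately have "\<exists>P' Q'. P' \<union> Q' = Y \<and> P' \<inter> Q' = {} \<and> P' \<noteq> {} \<and> Q' \<noteq> {} \<and> (\<forall>a\<in>P'. \<forall>b\<in>Q'. [a, b] \<doteq> [b, a])"
        using False PQ(4) by (intro exI[of _ "P \<inter> Y"] exI[of _ Q]) simp
      then show False using c unfolding conn_def by simp
    qed
  qed
  show ?thesis unfolding conn_def
  proof
    assume "\<exists>P Q. P \<union> Q = insert z Y \<and> P \<inter> Q = {} \<and> P \<noteq> {} \<and> Q \<noteq> {} \<and> (\<forall>a\<in>P. \<forall>b\<in>Q. [a, b] \<doteq> [b, a])"
    then obtain P Q where PQ: "P \<union> Q = insert z Y" "P \<inter> Q = {}" "P \<noteq> {}" "Q \<noteq> {}"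
      "\<forall>a\<in>P. \<forall>b\<in>Q. [a, b] \<doteq> [b, a]" by blast
    show False
    proof (cases "z \<in> P")
      case True then show False using key[of P Q] PQ by simp
    next
      case False
      then have "z \<in> Q" using PQ by auto
      moreover have "\<forall>a\<in>Q. \<forall>b\<in>P. [a, b] \<doteq> [b, a]"
      proof (intro ballI)
        fix a b assume "a \<in> Q" "b \<in> P"
        then have "[b, a] \<doteq> [a, b]" using PQ(5) by blast
        then show "[a, b] \<doteq> [b, a]" by (rule eqv_sym)
      qed
      moreover have "Q \<union> P = insert z Y" "Q \<inter> P = {}" using PQ(1,2) by auto
      ultimately show False using key[of Q P] PQ(3,4) by simp
    qed
  qed
qed

end

context cox begin

lemma main_T:
  "finite I \<Longrightarrow> I \<subseteq> S \<Longrightarrow> J \<subseteq> I \<Longrightarrow> FI I J \<Longrightarrow> Xs \<subseteq> I \<Longrightarrow> conn Xs \<Longrightarrow> \<not> Wfin Xs \<Longrightarrow> Xs \<subseteq> J"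
proof (induction "card I" arbitrary: I J Xs rule: less_induct)
  case less
  note fI = less.prems(1) and IS = less.prems(2) and JI = less.prems(3) and fi = less.prems(4)
    and XI = less.prems(5) and cX = less.prems(6) and wX = less.prems(7)
  show ?case
  proof (rule ccontr)
    assume nX: "\<not> Xs \<subseteq> J"
    have JS: "J \<subseteq> S" using JI IS by auto
    show False
    proof (cases "Xs = I")
      case False
      then have "Xs \<subset> I" using XI by auto
      then have cl: "card Xs < card I" by (rule psubset_card_mono[OF fI])
      have fX: "finite Xs" using XI fI finite_subset by blast
      have XS: "Xs \<subseteq> S" using XI IS by auto
      have "FI Xs (Xs \<inter> J)" by (rule FI_restrict[OF IS XI JS fi])
      then have "Xs \<subseteq> Xs \<inter> J" using less.hyps[OF cl fX XS _ _ order_refl cX wX] by blast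
      then show False using nX by blast
    next
      case True
      note XeqI = True
      have JsI: "J \<subset> I" using nX JI True by auto
      have fJ: "finite J" using JI fI finite_subset by blast
      have clJ: "card J < card I" using fI JsI by (simp add: psubset_card_mono)
      show False
      proof (cases "\<exists>Y \<subseteq> J. conn Y \<and> \<not> Wfin Y")
        case True
        then obtain Y0 where Y0: "Y0 \<subseteq> J \<and> conn Y0 \<and> \<not> Wfin Y0" by blast
        have bound: "\<forall>Y. Y \<subseteq> J \<and> conn Y \<and> \<not> Wfin Y \<longrightarrow> card Y < Suc (card J)"
          using fJ by (simp add: card_mono less_Suc_eq_le)
        obtain Y where Y: "Y \<subseteq> J \<and> conn Y \<and> \<not> Wfin Y"
          and Ymax: "\<And>Z. Z \<subseteq> J \<and> conn Z \<and> \<not> Wfin Z \<Longrightarrow> card Z \<le> card Y"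
          using ex_has_greatest_nat[of "\<lambda>Y. Y \<subseteq> J \<and> conn Y \<and> \<not> Wfin Y" Y0 card "Suc (card J)"] Y0 bound
          by blast
        have Yne: "Y \<noteq> {}" using Y Wfin_empty by auto
        have YI: "Y \<subseteq> I" using Y JI by auto
        have IY: "I - Y \<noteq> {}" using JsI Y by auto
        have "\<not> (\<forall>a\<in>Y. \<forall>b\<in>I - Y. [a, b] \<doteq> [b, a])"
        proof
          assume h: "\<forall>a\<in>Y. \<forall>b\<in>I - Y. [a, b] \<doteq> [b, a]"
          have "Y \<union> (I - Y) = I" "Y \<inter> (I - Y) = {}" using YI by auto
          then have "\<exists>P Q. P \<union> Q = I \<and> P \<inter> Q = {} \<and> P \<noteq> {} \<and> Q \<noteq> {} \<and> (\<forall>a\<in>P. \<forall>b\<in>Q. [a, b] \<doteq> [b, a])"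
            using Yne IY h by (intro exI[of _ Y] exI[of _ "I - Y"]) simp
          then show False using cX XeqI unfolding conn_def by simp
        qed
        then obtain a z where az: "a \<in> Y" "z \<in> I" "z \<notin> Y" "\<not> [a, z] \<doteq> [z, a]" by blast
        show False
        proof (cases "z \<in> J")
          case True
          have c2: "conn (insert z Y)" using conn_insert[OF _ az(3) az(1) az(4)] Y by simp
          have w2: "\<not> Wfin (insert z Y)" using Y Wfin_mono[of Y "insert z Y"] by blast
          have "insert z Y \<subseteq> J" using True Y by simp
          then have "card (insert z Y) \<le> card Y" using Ymax c2 w2 by blast
          moreover have "finite Y" using Y fJ finite_subset by blast
          ultimately show False using az(3) by simp
        next
          case False
          have fk: "FI J (comm_set J z)" by (rule FI_kil[OF IS JI az(2) False fi])
          have "comm_set J z \<subseteq> J" by (auto simp: comm_set_def)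
          then have "Y \<subseteq> comm_set J z"
            using less.hyps[OF clJ fJ JS _ fk] Y by blast
          then have "[a, z] \<doteq> [z, a]" using az(1) by (auto simp: comm_set_def)
          then show False using az(4) by simp
        qed
      next
        case False
        then have "Wfin J" using Wfin_conn[OF fJ JS] by blast
        then have "Wfin I" using Wfin_FI[OF IS JS fi] by simp
        then show False using wX XeqI by simp
      qed
    qed
  qed
qed

lemma G_carrier: "carrier (coxeter_group M S) = cls ` lists S"
  by (auto simp: coxeter_group_def quotient_def cls_def)

lemma some_cls: "a \<in> lists S \<Longrightarrow> a \<doteq> (SOME u. u \<in> cls a)"
proof -
  assume a: "a \<in> lists S"
  have "a \<in> cls a" using a cls_mem eqv_refl by blast
  then have "(SOME u. u \<in> cls a) \<in> cls a" by (rule someI)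
  then show ?thesis using cls_mem by blast
qed

lemma G_mult: "a \<in> lists S \<Longrightarrow> b \<in> lists S \<Longrightarrow> cls a \<otimes>\<^bsub>coxeter_group M S\<^esub> cls b = cls (a @ b)"
proof -
  assume a: "a \<in> lists S" and b: "b \<in> lists S"
  have "a @ b \<doteq> (SOME u. u \<in> cls a) @ (SOME v. v \<in> cls b)"
    using eqv_app[OF some_cls[OF a] some_cls[OF b]] .
  then have "cls ((SOME u. u \<in> cls a) @ (SOME v. v \<in> cls b)) = cls (a @ b)"
    using cls_eq eqv_sym by metis
  then show ?thesis by (simp add: coxeter_group_def cls_def)
qed

lemma G_one: "\<one>\<^bsub>coxeter_group M S\<^esub> = cls []"
  by (simp add: coxeter_group_def cls_def)

lemma G_group: "group (coxeter_group M S)"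
proof (rule groupI)
  let ?G = "coxeter_group M S"
  fix x y assume "x \<in> carrier ?G" "y \<in> carrier ?G"
  then obtain a b where "a \<in> lists S" "b \<in> lists S" "x = cls a" "y = cls b" by (auto simp: G_carrier)
  then show "x \<otimes>\<^bsub>?G\<^esub> y \<in> carrier ?G" by (simp add: G_mult G_carrier)
next
  show "\<one>\<^bsub>coxeter_group M S\<^esub> \<in> carrier (coxeter_group M S)" by (auto simp: G_one G_carrier)
next
  let ?G = "coxeter_group M S"
  fix x y z assume "x \<in> carrier ?G" "y \<in> carrier ?G" "z \<in> carrier ?G"
  then obtain a b c where "a \<in> lists S" "b \<in> lists S" "c \<in> lists S" "x = cls a" "y = cls b" "z = cls c"
    by (auto simp: G_carrier)
  then show "x \<otimes>\<^bsub>?G\<^esub> y \<otimes>\<^bsub>?G\<^esub> z = x \<otimes>\<^bsub>?G\<^esub> (y \<otimes>\<^bsub>?G\<^esub> z)" by (simp add: G_mult)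
next
  let ?G = "coxeter_group M S"
  fix x assume "x \<in> carrier ?G"
  then obtain a where "a \<in> lists S" "x = cls a" by (auto simp: G_carrier)
  then show "\<one>\<^bsub>?G\<^esub> \<otimes>\<^bsub>?G\<^esub> x = x" by (simp add: G_mult G_one)
next
  let ?G = "coxeter_group M S"
  fix x assume "x \<in> carrier ?G"
  then obtain a where a: "a \<in> lists S" "x = cls a" by (auto simp: G_carrier)
  have "cls (rev a) \<otimes>\<^bsub>?G\<^esub> x = cls (rev a @ a)" using a by (simp add: G_mult)
  also have "\<dots> = cls []" using cls_eq[OF rev_cancel[OF a(1)]] .
  finally show "\<exists>y\<in>carrier ?G. y \<otimes>\<^bsub>?G\<^esub> x = \<one>\<^bsub>?G\<^esub>"
    using a by (intro bexI[of _ "cls (rev a)"]) (auto simp: G_one G_carrier)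
qed

lemma G_inv: "a \<in> lists S \<Longrightarrow> inv\<^bsub>coxeter_group M S\<^esub> (cls a) = cls (rev a)"
proof -
  assume a: "a \<in> lists S"
  have "cls (rev a) \<otimes>\<^bsub>coxeter_group M S\<^esub> cls a = \<one>\<^bsub>coxeter_group M S\<^esub>"
    using a cls_eq[OF rev_cancel[OF a]] by (simp add: G_mult G_one)
  then show ?thesis using group.inv_equality[OF G_group] a by (auto simp: G_carrier)
qed

lemma G_gen: "A \<subseteq> S \<Longrightarrow> generate (coxeter_group M S) (cox_gen M S ` A) = cls ` lists A"
proof
  assume A: "A \<subseteq> S"
  show "generate (coxeter_group M S) (cox_gen M S ` A) \<subseteq> cls ` lists A"
  proof
    fix x assume "x \<in> generate (coxeter_group M S) (cox_gen M S ` A)"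
    then show "x \<in> cls ` lists A"
    proof (induction rule: generate.induct)
      case one then show ?case by (auto simp: G_one)
    next
      case (incl h) then show ?case by (auto simp: cox_gen_def cls_def)
    next
      case (inv h)
      then obtain i where i: "i \<in> A" "h = cls [i]" by (auto simp: cox_gen_def cls_def)
      then have "inv\<^bsub>coxeter_group M S\<^esub> h = cls [i]" using G_inv[of "[i]"] A by auto
      then show ?case using i by auto
    next
      case (eng h1 h2)
      then obtain a b where "a \<in> lists A" "b \<in> lists A" "h1 = cls a" "h2 = cls b" by blast
      moreover have "a \<in> lists S" "b \<in> lists S" using calculation A by auto
      ultimately show ?case by (auto simp: G_mult)
    qed
  qed
next
  assume A: "A \<subseteq> S"
  show "cls ` lists A \<subseteq> generate (coxeter_group M S) (cox_gen M S ` A)"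
  proof
    fix x assume "x \<in> cls ` lists A"
    then obtain a where a: "a \<in> lists A" "x = cls a" by blast
    have "cls a \<in> generate (coxeter_group M S) (cox_gen M S ` A)" using a(1)
    proof (induction a)
      case Nil then show ?case using generate.one[of "coxeter_group M S"] by (simp add: G_one)
    next
      case (Cons i a)
      have "cls [i] \<in> generate (coxeter_group M S) (cox_gen M S ` A)"
        using Cons generate.incl[of "cls [i]" "cox_gen M S ` A"] by (auto simp: cox_gen_def cls_def)
      then have "cls [i] \<otimes>\<^bsub>coxeter_group M S\<^esub> cls a \<in> generate (coxeter_group M S) (cox_gen M S ` A)"
        using Cons generate.eng by auto
      moreover have "i \<in> S" "a \<in> lists S" using Cons A by auto
      ultimately show ?case using G_mult[of "[i]" a] by simp
    qed
    then show "x \<in> generate (coxeter_group M S) (cox_gen M S ` A)" using a by simp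
  qed
qed

lemma cos_union: "J \<subseteq> S \<Longrightarrow> g \<in> lists S \<Longrightarrow>
   cos J g = \<Union> ((cls ` lists J) #>\<^bsub>coxeter_group M S\<^esub> cls g)"
proof -
  assume J: "J \<subseteq> S" and g: "g \<in> lists S"
  have m: "cls a \<otimes>\<^bsub>coxeter_group M S\<^esub> cls g = cls (a @ g)" if "a \<in> lists J" for a
  proof -
    have "a \<in> lists S" using that J by auto
    then show ?thesis using G_mult g by simp
  qed
  have "(cls ` lists J) #>\<^bsub>coxeter_group M S\<^esub> cls g = (\<lambda>a. cls (a @ g)) ` lists J"
    unfolding r_coset_def using m by auto
  then show ?thesis unfolding cos_def by (auto simp: cls_mem)
qed

lemma FI_from_rcosets:
  assumes J: "J \<subseteq> S" and fin: "finite (rcosets\<^bsub>coxeter_group M S\<^esub> (cls ` lists J))"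
  shows "FI S J"
proof -
  have "cos J ` lists S \<subseteq> Union ` (rcosets\<^bsub>coxeter_group M S\<^esub> (cls ` lists J))"
  proof
    fix x assume "x \<in> cos J ` lists S"
    then obtain g where g: "g \<in> lists S" "x = cos J g" by blast
    have "(cls ` lists J) #>\<^bsub>coxeter_group M S\<^esub> cls g \<in> rcosets\<^bsub>coxeter_group M S\<^esub> (cls ` lists J)"
      unfolding RCOSETS_def using g by (auto simp: G_carrier)
    then show "x \<in> Union ` (rcosets\<^bsub>coxeter_group M S\<^esub> (cls ` lists J))"
      using cos_union[OF J g(1)] g by blast
  qed
  then show ?thesis unfolding FI_def by (rule finite_subset[OF _ finite_imageI[OF fin]])
qed

lemma conn_from_indec: "T \<subseteq> S \<Longrightarrow> \<not> cox_decomposable M S T \<Longrightarrow> conn T"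
proof -
  assume T: "T \<subseteq> S" and nd: "\<not> cox_decomposable M S T"
  show "conn T" unfolding conn_def
  proof
    assume "\<exists>P Q. P \<union> Q = T \<and> P \<inter> Q = {} \<and> P \<noteq> {} \<and> Q \<noteq> {} \<and> (\<forall>a\<in>P. \<forall>b\<in>Q. [a, b] \<doteq> [b, a])"
    then obtain P Q where PQ: "P \<union> Q = T" "P \<inter> Q = {}" "P \<noteq> {}" "Q \<noteq> {}" "\<forall>a\<in>P. \<forall>b\<in>Q. [a, b] \<doteq> [b, a]"
      by blast
    have "\<forall>a\<in>P. \<forall>b\<in>Q. cox_gen M S a \<otimes>\<^bsub>coxeter_group M S\<^esub> cox_gen M S b
                     = cox_gen M S b \<otimes>\<^bsub>coxeter_group M S\<^esub> cox_gen M S a"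
    proof (intro ballI)
      fix a b assume ab: "a \<in> P" "b \<in> Q"
      then have abS: "a \<in> S" "b \<in> S" using PQ T by auto
      have "cls [a, b] = cls [b, a]" using cls_eq PQ(5) ab by blast
      then show "cox_gen M S a \<otimes>\<^bsub>coxeter_group M S\<^esub> cox_gen M S b
                     = cox_gen M S b \<otimes>\<^bsub>coxeter_group M S\<^esub> cox_gen M S a"
        using G_mult[of "[a]" "[b]"] G_mult[of "[b]" "[a]"] abS
        by (simp add: cox_gen_def cls_def[symmetric])
    qed
    then show False using nd PQ unfolding cox_decomposable_def by blast
  qed
qed

end

theorem corollary3p2:
  fixes M :: "nat \<Rightarrow> nat \<Rightarrow> enat" and k l m :: nat
  defines "G \<equiv> coxeter_group M {..k}"
  assumes cox: "coxeter_matrix M {..k}"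
    and G_inf: "infinite (carrier G)"
    and lk: "l \<le> k"
    and Gl_inf: "infinite (generate G (cox_gen M {..k} ` {..l}))"
    and Gl_indec: "\<not> cox_decomposable M {..k} {..l}"
    and m_pos: "0 < m" and mk: "m \<le> k"
  shows "infinite (rcosets\<^bsub>G\<^esub> (generate G (cox_gen M {..k} ` {m..k})))"
proof
  interpret C: cox M k by (rule cox.intro[OF cox])
  assume fin: "finite (rcosets\<^bsub>G\<^esub> (generate G (cox_gen M {..k} ` {m..k})))"
  have J: "{m..k} \<subseteq> {..k}" by auto
  have L: "{..l} \<subseteq> {..k}" using lk by auto
  have "finite (rcosets\<^bsub>coxeter_group M {..k}\<^esub> (C.cls ` lists {m..k}))"
    using fin C.G_gen[OF J] by (simp add: G_def)
  then have fi: "C.FI {..k} {m..k}" by (rule C.FI_from_rcosets[OF J])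
  have nw: "\<not> C.Wfin {..l}"
    using Gl_inf C.G_gen[OF L] by (simp add: G_def C.Wfin_def)
  have cn: "C.conn {..l}" by (rule C.conn_from_indec[OF L Gl_indec])
  have "{..l} \<subseteq> {m..k}"
    by (rule C.main_T[OF _ order_refl J fi L cn nw]) simp
  then show False using m_pos by auto
qed

end
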